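(* Let $T_0$ and $T_1$ be local, invertible stochastic matrices on the state space $\mathbb{Z}\times\{1,\dots,D\}$. If $T_0$ and $T_1$ are not homotopic (in the sense defined in the context), then there is no local rate matrix $R(t)$, $t\in[0,1]$, such that $$T_1=\mathcal{T}\exp\Big[\int_0^1 dt\,R(t)\Big]\,T_0 .$$ In particular, if a local invertible stochastic matrix $T$ is not homotopic to the identity matrix, then $T$ cannot be written as $\mathcal{T}\exp\big[\int_0^{\tau}dt\,R(t)\big]$ for any $\tau>0$ and any local rate matrix $R(t)$, $t\in[0,\tau]$ (i.e. $T$ cannot be generated by any local Markovian master equation).
   Context: States are pairs $(j,a)$ with lattice site $j\in\mathbb{Z}$ and internal index $a\in\{1,\dots,D\}$. A stochastic matrix is a real matrix $T=(T_{i,a;j,b})$ indexed by pairs of states with $T_{i,a;j,b}\ge 0$ and $\sum_{i,a}T_{i,a;j,b}=1$ for every $(j,b)$; it acts on probability vectors $\mathbf p=(p_{j,b})$ by $\mathbf p\mapsto T\mathbf p$, and is a bounded operator on $\ell^1(\mathbb{Z}\times\{1,\dots,D\})$. $T$ is local if there are constants $C,\ell>0$ with $T_{i,a;j,b}\le C e^{-|i-j|/\ell}$ for all sufficiently large $|i-j|$. $T$ is invertible if it has a bounded inverse on $\ell^1$. Two local invertible stochastic matrices $T_0,T_1$ are homotopic if there is a family $T(s)$, $s\in[0,1]$, continuous in $s$ (in $\ell^1$ operator norm), such that each $T(s)$ is a local invertible stochastic matrix, $T(0)=T_0$ and $T(1)=T_1$. A rate matrix $R(t)=(R_{i,a;j,b}(t))$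 is a real matrix with $R_{i,a;j,b}(t)\ge 0$ for $(i,a)\ne(j,b)$ and $\sum_{i,a}R_{i,a;j,b}(t)=0$ for all $(j,b)$; it generates the master equation $\frac{d\mathbf p}{dt}=R(t)\mathbf p(t)$. A family $R(t)$ is local if there exist $C,\ell>0$, independent of $t$, with $|R_{i,a;j,b}(t)|\le Ce^{-|i-j|/\ell}$ for all $i,j,a,b,t$; we take $R(t)$ piecewise continuous in $t$. $\mathcal{T}\exp[\int_0^s dt\,R(t)]$ denotes the time-ordered exponential, i.e. the solution $P(s)$ of $\frac{dP}{ds}=R(s)P(s)$, $P(0)=I$. *)

theory Defs
  imports "HOL-Analysis.Analysis"
begin

text \<open>States are pairs (j,a) with j an integer lattice site and a an internal index
  ranging over a finite (nonempty) type 'd, playing the role of {1,...,D}.\<close>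

type_synonym 'd smat = "(int \<times> 'd) \<Rightarrow> (int \<times> 'd) \<Rightarrow> real"

definition id_mat :: "'d smat" where
  "id_mat = (\<lambda>x y. if x = y then 1 else 0)"

definition mat_mult :: "'d smat \<Rightarrow> 'd smat \<Rightarrow> 'd smat" where
  "mat_mult A B = (\<lambda>x z. (\<Sum>\<^sub>\<infinity> y. A x y * B y z))"

text \<open>A column-wise l1 estimate: the l1 operator norm of A - B is at most e
  (the l1 -> l1 operator norm of a matrix is the supremum of the l1 norms of its columns).\<close>
definition mat_close :: "'d smat \<Rightarrow> 'd smat \<Rightarrow> real \<Rightarrow> bool" where
  "mat_close A B e \<longleftrightarrow>
     (\<forall>y. (\<lambda>x. \<bar>A x y - B x y\<bar>) summable_on UNIV \<and> (\<Sum>\<^sub>\<infinity> x. \<bar>A x y - B x y\<bar>) \<le> e)"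

definition stochastic :: "'d smat \<Rightarrow> bool" where
  "stochastic T \<longleftrightarrow> (\<forall>x y. T x y \<ge> 0) \<and> (\<forall>y. ((\<lambda>x. T x y) has_sum 1) UNIV)"

definition local_mat :: "'d smat \<Rightarrow> bool" where
  "local_mat T \<longleftrightarrow> (\<exists>C l N. C > 0 \<and> l > 0 \<and>
     (\<forall>i a j b. \<bar>i - j\<bar> \<ge> N \<longrightarrow> T (i,a) (j,b) \<le> C * exp (- real_of_int \<bar>i - j\<bar> / l)))"

definition invertible_l1 :: "'d smat \<Rightarrow> bool" where
  "invertible_l1 T \<longleftrightarrow> (\<exists>S M. (\<forall>y. (\<lambda>x. \<bar>S x y\<bar>) summable_on UNIV \<and> (\<Sum>\<^sub>\<infinity> x. \<bar>S x y\<bar>) \<le> M)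
       \<and> mat_mult S T = id_mat \<and> mat_mult T S = id_mat)"

definition lis_mat :: "'d smat \<Rightarrow> bool" where
  "lis_mat T \<longleftrightarrow> local_mat T \<and> invertible_l1 T \<and> stochastic T"

definition mat_continuous_on :: "real set \<Rightarrow> (real \<Rightarrow> 'd smat) \<Rightarrow> bool" where
  "mat_continuous_on S F \<longleftrightarrow> (\<forall>t\<in>S. \<forall>e>0. \<exists>d>0. \<forall>t'\<in>S. \<bar>t' - t\<bar> < d \<longrightarrow> mat_close (F t') (F t) e)"

definition homotopic_mat :: "'d smat \<Rightarrow> 'd smat \<Rightarrow> bool" where
  "homotopic_mat T0 T1 \<longleftrightarrow> (\<exists>F. (\<forall>s\<in>{0..1}. lis_mat (F s)) \<and> mat_continuous_on {0..1} F
      \<and> F 0 = T0 \<and> F 1 = T1)"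

definition rate_mat :: "'d smat \<Rightarrow> bool" where
  "rate_mat R \<longleftrightarrow> (\<forall>x y. x \<noteq> y \<longrightarrow> R x y \<ge> 0) \<and> (\<forall>y. ((\<lambda>x. R x y) has_sum 0) UNIV)"

definition local_rate_family :: "real \<Rightarrow> (real \<Rightarrow> 'd smat) \<Rightarrow> bool" where
  "local_rate_family \<tau> R \<longleftrightarrow> (\<forall>t\<in>{0..\<tau>}. rate_mat (R t)) \<and>
     (\<exists>C l. C > 0 \<and> l > 0 \<and> (\<forall>t\<in>{0..\<tau>}. \<forall>i a j b.
        \<bar>R t (i,a) (j,b)\<bar> \<le> C * exp (- real_of_int \<bar>i - j\<bar> / l)))"

definition piecewise_continuous_mat :: "real \<Rightarrow> (real \<Rightarrow> 'd smat) \<Rightarrow> bool" where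
  "piecewise_continuous_mat \<tau> R \<longleftrightarrow> (\<exists>K. finite K \<and>
     (\<forall>t\<in>{0..\<tau>} - K. \<forall>e>0. \<exists>d>0. \<forall>t'\<in>{0..\<tau>}. \<bar>t' - t\<bar> < d \<longrightarrow> mat_close (R t') (R t) e) \<and>
     (\<forall>t\<in>K \<inter> {0..\<tau>}.
        (t < \<tau> \<longrightarrow> (\<exists>L. \<forall>e>0. \<exists>d>0. \<forall>t'\<in>{0..\<tau>}. t < t' \<and> t' < t + d \<longrightarrow> mat_close (R t') L e)) \<and>
        (0 < t \<longrightarrow> (\<exists>L. \<forall>e>0. \<exists>d>0. \<forall>t'\<in>{0..\<tau>}. t - d < t' \<and> t' < t \<longrightarrow> mat_close (R t') L e))))"

text \<open>P is the time-ordered exponential of R on [0,tau]: the (continuous) solution of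
  dP/ds = R(s) P(s), P(0) = I, the derivative taken in l1 operator norm and required
  at all but finitely many s (the jump points of the piecewise continuous R).\<close>
definition texp_solution :: "real \<Rightarrow> (real \<Rightarrow> 'd smat) \<Rightarrow> (real \<Rightarrow> 'd smat) \<Rightarrow> bool" where
  "texp_solution \<tau> R P \<longleftrightarrow> P 0 = id_mat \<and> mat_continuous_on {0..\<tau>} P \<and>
     (\<exists>K. finite K \<and> (\<forall>s\<in>{0..\<tau>} - K. \<forall>e>0. \<exists>d>0. \<forall>h. h \<noteq> 0 \<and> \<bar>h\<bar> < d \<and> s + h \<in> {0..\<tau>} \<longrightarrow>
        mat_close (\<lambda>x y. (P (s + h) x y - P s x y) / h) (mat_mult (R s) (P s)) e))"

end

theory Submission
  imports Defs "HOL-Analysis.Analysis"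
begin

lemma dini0:
  fixes f :: "real \<Rightarrow> real"
  assumes ab: "a \<le> b" and cont: "continuous_on {a..b} f"
    and D: "\<And>s e. s \<in> {a..<b} \<Longrightarrow> e > 0 \<Longrightarrow> \<exists>d>0. \<forall>h. 0 < h \<and> h < d \<and> s + h \<le> b \<longrightarrow> f (s+h) \<le> f s + h*e"
  shows "f b \<le> f a"
proof -
  have main: "f b \<le> f a + e*(b-a)" if e: "e>0" for e
  proof -
    define S where "S = {t\<in>{a..b}. f t - e*(t-a) \<le> f a}"
    have S_eq: "S = (\<lambda>t. f t - e*(t-a)) -` {..f a} \<inter> {a..b}" by (auto simp: S_def)
    have "continuous_on {a..b} (\<lambda>t. f t - e*(t-a))"
      by (intro continuous_intros cont)
    then have "closed S" unfolding S_eq by (intro closed_vimage_Int) auto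
    moreover have "a \<in> S" using ab by (auto simp: S_def)
    moreover have bdd: "bdd_above S" by (auto simp: S_def bdd_above_def)
    ultimately have cS: "Sup S \<in> S" using closed_contains_Sup by blast
    define c where "c = Sup S"
    have cS': "c \<in> S" using cS c_def by simp
    show ?thesis
    proof (cases "c = b")
      case True then show ?thesis using cS' by (auto simp: S_def)
    next
      case False
      then have cb: "c < b" using cS' by (auto simp: S_def)
      obtain d where d: "d>0" "\<forall>h. 0<h \<and> h<d \<and> c+h \<le> b \<longrightarrow> f(c+h) \<le> f c + h*e"
        using D[of c e] cS' cb e by (auto simp: S_def)
      define h where "h = min (d/2) (b - c)"
      have h: "0 < h" "h < d" "c + h \<le> b" using d cb by (auto simp: h_def)
      have "f (c+h) \<le> f c + h*e" using d h by auto
      moreover have "f c - e*(c-a) \<le> f a" using cS' by (auto simp: S_def)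
      ultimately have "c + h \<in> S" using h cS' by (auto simp: S_def algebra_simps)
      then have "c + h \<le> c" unfolding c_def using bdd by (rule cSup_upper)
      then show ?thesis using h by simp
    qed
  qed
  show ?thesis
  proof (rule ccontr)
    assume nt: "\<not> f b \<le> f a"
    define e where "e = (f b - f a) / (2*(b-a+1))"
    have e: "e > 0" using nt ab by (auto simp: e_def)
    have "e*(b-a) \<le> (f b - f a)/2"
      using nt ab unfolding e_def by (simp add: field_simps)
    then show False using main[OF e] nt by simp
  qed
qed

lemma dini_fin:
  fixes f :: "real \<Rightarrow> real"
  assumes K: "finite K"
  shows "a \<le> b \<Longrightarrow> continuous_on {a..b} f \<Longrightarrow>
    (\<And>s e. s \<in> {a..<b} - K \<Longrightarrow> e > 0 \<Longrightarrow> \<exists>d>0. \<forall>h. 0 < h \<and> h < d \<and> s + h \<le> b \<longrightarrow> f (s+h) \<le> f s + h*e)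
    \<Longrightarrow> f b \<le> f a"
  using K
proof (induction K arbitrary: a b rule: finite_induct)
  case empty
  then show ?case using dini0[of a b f] by auto
next
  case (insert k K)
  show ?case
  proof (cases "k \<in> {a..<b}")
    case False
    then show ?thesis using insert.IH[of a b] insert.prems by auto
  next
    case True
    have c1: "continuous_on {a..k} f"
      by (rule continuous_on_subset[OF insert.prems(2)]) (use True in auto)
    have "f k \<le> f a"
    proof (rule insert.IH[OF _ c1])
      show "a \<le> k" using True by auto
      fix s e assume s: "s \<in> {a..<k} - K" and e: "(e::real) > 0"
      then have "s \<in> {a..<b} - insert k K" using True by auto
      from insert.prems(3)[OF this e] obtain d where d: "d>0"
        "\<forall>h. 0 < h \<and> h < d \<and> s + h \<le> b \<longrightarrow> f (s+h) \<le> f s + h*e" by blast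
      then show "\<exists>d>0. \<forall>h. 0 < h \<and> h < d \<and> s + h \<le> k \<longrightarrow> f (s+h) \<le> f s + h*e"
        using True by (intro exI[of _ d]) auto
    qed
    moreover have "f b \<le> f k"
    proof (rule ccontr)
      assume nb: "\<not> f b \<le> f k"
      have "k \<in> {a..b}" using True by auto
      with insert.prems(2) obtain \<delta> where dl: "\<delta> > 0"
        "\<forall>x'\<in>{a..b}. dist x' k < \<delta> \<longrightarrow> dist (f x') (f k) < f b - f k"
        using nb unfolding continuous_on_iff by (metis diff_gt_0_iff_gt not_le)
      define k' where "k' = k + min (\<delta>/2) (b - k)"
      have k': "k < k'" "k' \<le> b" "k' \<in> {a..b}" "dist k' k < \<delta>"
        using True dl by (auto simp: k'_def dist_real_def)
      have "f b \<le> f k'"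
      proof (rule insert.IH)
        show "k' \<le> b" using k' by simp
        show "continuous_on {k'..b} f"
          by (rule continuous_on_subset[OF insert.prems(2)]) (use True k' in auto)
        fix s e assume s: "s \<in> {k'..<b} - K" and e: "(e::real) > 0"
        then have "s \<in> {a..<b} - insert k K" using True k' by auto
        from insert.prems(3)[OF this e] show "\<exists>d>0. \<forall>h. 0 < h \<and> h < d \<and> s + h \<le> b \<longrightarrow> f (s+h) \<le> f s + h*e" .
      qed
      moreover have "dist (f k') (f k) < f b - f k" using dl k' by auto
      ultimately show False by (auto simp: dist_real_def)
    qed
    ultimately show ?thesis by simp
  qed
qed

lemma gronwall:
  fixes f :: "real \<Rightarrow> real"
  assumes ab: "a \<le> b" and cont: "continuous_on {a..b} f" and K: "finite K" and q: "q \<ge> 0"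
    and nn: "\<And>t. t \<in> {a..b} \<Longrightarrow> f t \<ge> 0"
    and D: "\<And>s e. s \<in> {a..<b} - K \<Longrightarrow> e > 0 \<Longrightarrow> \<exists>d>0. \<forall>h. 0 < h \<and> h < d \<and> s + h \<le> b \<longrightarrow> f (s+h) \<le> f s + h*(q * f s + e)"
  shows "f b \<le> f a * exp (q*(b-a))"
proof -
  define g where "g t = f t * exp (-q*(t-a))" for t
  have "g b \<le> g a"
  proof (rule dini_fin[OF K ab])
    show "continuous_on {a..b} g" unfolding g_def by (intro continuous_intros cont)
    fix s e assume s: "s \<in> {a..<b} - K" and e: "(e::real) > 0"
    from D[OF s e] obtain d where d: "d>0" "\<forall>h. 0 < h \<and> h < d \<and> s + h \<le> b \<longrightarrow> f (s+h) \<le> f s + h*(q * f s + e)" by blast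
    show "\<exists>d>0. \<forall>h. 0 < h \<and> h < d \<and> s + h \<le> b \<longrightarrow> g (s+h) \<le> g s + h*e"
    proof (intro exI[of _ d] conjI allI impI)
      fix h assume h: "0 < h \<and> h < d \<and> s + h \<le> b"
      have fs: "f s \<ge> 0" using nn s by auto
      have E1: "exp (-q*(s+h-a)) = exp (-q*(s-a)) * exp (-q*h)" by (simp add: exp_add[symmetric] algebra_simps)
      have E2: "(1 + q*h) * exp (-q*h) \<le> 1"
      proof -
        have "1 + q*h \<le> exp (q*h)" by (rule exp_ge_add_one_self)
        then have "(1 + q*h) * exp (-q*h) \<le> exp (q*h) * exp (-q*h)" by (simp add: mult_right_mono)
        also have "\<dots> = 1" by (simp add: exp_minus field_simps)
        finally show ?thesis .
      qed
      have E3: "exp (-q*(s-a)) \<le> 1" "exp (-q*h) \<le> 1" using q s h by auto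
      have "g (s+h) = f (s+h) * exp (-q*(s-a)) * exp (-q*h)" unfolding g_def E1 by simp
      also have "\<dots> \<le> (f s * (1 + q*h) + h*e) * exp (-q*(s-a)) * exp (-q*h)"
        using d h by (intro mult_right_mono) (auto simp: algebra_simps)
      also have "\<dots> = f s * exp (-q*(s-a)) * ((1 + q*h) * exp (-q*h)) + h*e*(exp (-q*(s-a)) * exp (-q*h))"
        by (simp add: algebra_simps)
      also have "\<dots> \<le> f s * exp (-q*(s-a)) * 1 + h*e*1"
      proof (intro add_mono mult_left_mono)
        show "(1 + q*h) * exp (-q*h) \<le> 1" by (rule E2)
        show "exp (-q*(s-a)) * exp (-q*h) \<le> 1" using E3 by (simp add: mult_le_one)
      qed (use fs h e in auto)
      finally show "g (s+h) \<le> g s + h*e" by (simp add: g_def)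
    qed (use d in simp)
  qed
  then have "f b * exp (-q*(b-a)) \<le> f a" by (simp add: g_def)
  then have X: "f b * exp (-q*(b-a)) * exp (q*(b-a)) \<le> f a * exp (q*(b-a))" by (simp add: mult_right_mono)
  have eq: "f b * exp (-q*(b-a)) * exp (q*(b-a)) = f b"
    by (simp add: mult.assoc exp_add[symmetric])
  show ?thesis using X unfolding eq .
qed


lemma summable_on_diff':
  fixes f g :: "'a \<Rightarrow> real"
  assumes "f summable_on A" "g summable_on A"
  shows "(\<lambda>x. f x - g x) summable_on A"
  using summable_on_add[OF assms(1) summable_on_uminus[THEN iffD2, OF assms(2)]] by simp

lemma infsum_diff':
  fixes f g :: "'a \<Rightarrow> real"
  assumes "f summable_on A" "g summable_on A"
  shows "infsum (\<lambda>x. f x - g x) A = infsum f A - infsum g A"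
  using infsum_add[OF assms(1) summable_on_uminus[THEN iffD2, OF assms(2)]] by (simp add: infsum_uminus)

lemma abs_summable_real:
  fixes f :: "'a \<Rightarrow> real"
  shows "(\<lambda>x. \<bar>f x\<bar>) summable_on A \<longleftrightarrow> f summable_on A"
  using summable_on_iff_abs_summable_on_real[of f A] by simp

lemma summable_real_cmp:
  fixes f :: "'a \<Rightarrow> real"
  assumes "g summable_on A" "\<And>x. x \<in> A \<Longrightarrow> \<bar>f x\<bar> \<le> g x"
  shows "f summable_on A"
proof -
  have "(\<lambda>x. norm (f x)) summable_on A"
    by (rule Infinite_Sum.abs_summable_on_comparison_test'[OF assms(1)]) (use assms(2) in auto)
  then show ?thesis using abs_summable_real[of f A] by simp
qed

lemma infsum_abs_le:
  fixes f :: "'a \<Rightarrow> real"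
  assumes "(\<lambda>x. \<bar>f x\<bar>) summable_on A"
  shows "\<bar>infsum f A\<bar> \<le> infsum (\<lambda>x. \<bar>f x\<bar>) A"
  using norm_infsum_bound[of f A] assms by simp

lemma infsum_le_cmp:
  fixes f :: "'a \<Rightarrow> real"
  assumes "g summable_on A" "\<And>x. x \<in> A \<Longrightarrow> \<bar>f x\<bar> \<le> g x"
  shows "\<bar>infsum f A\<bar> \<le> infsum g A"
proof -
  have s: "(\<lambda>x. \<bar>f x\<bar>) summable_on A" using summable_real_cmp[OF assms] abs_summable_real by blast
  have "\<bar>infsum f A\<bar> \<le> infsum (\<lambda>x. \<bar>f x\<bar>) A" by (rule infsum_abs_le[OF s])
  also have "\<dots> \<le> infsum g A" by (rule infsum_mono[OF s assms(1)]) (use assms(2) in auto)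
  finally show ?thesis .
qed

lemma elem_le_infsum:
  fixes f :: "'a \<Rightarrow> real"
  assumes "f summable_on UNIV" "\<And>x. f x \<ge> 0"
  shows "f x \<le> infsum f UNIV"
  using finite_sum_le_infsum[OF assms(1), of "{x}"] assms(2) by simp

definition vb :: "('s \<Rightarrow> real) \<Rightarrow> real \<Rightarrow> bool" where
  "vb u M \<longleftrightarrow> (\<lambda>x. \<bar>u x\<bar>) summable_on UNIV \<and> (\<Sum>\<^sub>\<infinity>x. \<bar>u x\<bar>) \<le> M"

definition cb :: "('s \<Rightarrow> 's \<Rightarrow> real) \<Rightarrow> real \<Rightarrow> bool" where
  "cb A M \<longleftrightarrow> (\<forall>y. vb (\<lambda>x. A x y) M)"

definition mv :: "('s \<Rightarrow> 's \<Rightarrow> real) \<Rightarrow> ('s \<Rightarrow> real) \<Rightarrow> 's \<Rightarrow> real" where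
  "mv A u = (\<lambda>x. \<Sum>\<^sub>\<infinity>z. A x z * u z)"

lemma mat_mult_mv: "mat_mult A B x y = mv A (\<lambda>z. B z y) x"
  by (simp add: mat_mult_def mv_def)

lemma mat_close_cb: "mat_close A B e \<longleftrightarrow> cb (\<lambda>x y. A x y - B x y) e"
  by (simp add: mat_close_def cb_def vb_def)

lemma vb_entry: "vb u M \<Longrightarrow> \<bar>u x\<bar> \<le> M"
proof -
  assume a: "vb u M"
  have "\<bar>u x\<bar> \<le> (\<Sum>\<^sub>\<infinity>x. \<bar>u x\<bar>)"
    by (rule elem_le_infsum) (use a in \<open>auto simp: vb_def\<close>)
  then show ?thesis using a unfolding vb_def by linarith
qed

lemma vb_nonneg: "vb u M \<Longrightarrow> M \<ge> 0"
proof -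
  assume "vb u M"
  from vb_entry[OF this, of undefined] show ?thesis by linarith
qed

lemma vb_mono: "vb u M \<Longrightarrow> M \<le> M' \<Longrightarrow> vb u M'"
  unfolding vb_def by auto

lemma vb_summable: "vb u M \<Longrightarrow> u summable_on UNIV"
  unfolding vb_def using abs_summable_real by blast

lemma vb_add:
  assumes "vb u M" "vb v N"
  shows "vb (\<lambda>x. u x + v x) (M + N)"
proof -
  have s: "(\<lambda>x. \<bar>u x\<bar> + \<bar>v x\<bar>) summable_on UNIV" using assms unfolding vb_def
    by (intro summable_on_add) auto
  have s2: "(\<lambda>x. \<bar>u x + v x\<bar>) summable_on UNIV"
    by (rule summable_real_cmp[OF s]) auto
  have "(\<Sum>\<^sub>\<infinity>x. \<bar>u x + v x\<bar>) \<le> (\<Sum>\<^sub>\<infinity>x. \<bar>u x\<bar> + \<bar>v x\<bar>)"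
    by (rule infsum_mono[OF s2 s]) auto
  also have "\<dots> = (\<Sum>\<^sub>\<infinity>x. \<bar>u x\<bar>) + (\<Sum>\<^sub>\<infinity>x. \<bar>v x\<bar>)"
    using assms unfolding vb_def by (intro infsum_add) auto
  finally show ?thesis using assms s2 unfolding vb_def by auto
qed

lemma vb_uminus: "vb u M \<Longrightarrow> vb (\<lambda>x. - u x) M"
  unfolding vb_def by simp

lemma vb_diff:
  assumes "vb u M" "vb v N"
  shows "vb (\<lambda>x. u x - v x) (M + N)"
  using vb_add[OF assms(1) vb_uminus[OF assms(2)]] by simp

lemma vb_scale:
  assumes "vb u M"
  shows "vb (\<lambda>x. c * u x) (\<bar>c\<bar> * M)"
proof -
  have "(\<lambda>x. \<bar>u x\<bar>) summable_on UNIV" using assms unfolding vb_def by auto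
  then have "(\<lambda>x. \<bar>c\<bar> * \<bar>u x\<bar>) summable_on UNIV" by (rule summable_on_cmult_right)
  moreover have "(\<Sum>\<^sub>\<infinity>x. \<bar>c\<bar> * \<bar>u x\<bar>) = \<bar>c\<bar> * (\<Sum>\<^sub>\<infinity>x. \<bar>u x\<bar>)" by (rule infsum_cmult_right')
  moreover have "\<bar>c\<bar> * (\<Sum>\<^sub>\<infinity>x. \<bar>u x\<bar>) \<le> \<bar>c\<bar> * M"
    using assms unfolding vb_def by (intro mult_left_mono) auto
  ultimately show ?thesis unfolding vb_def by (simp add: abs_mult)
qed

lemma vb_cmp:
  assumes "vb u M" "\<And>x. \<bar>v x\<bar> \<le> \<bar>u x\<bar>"
  shows "vb v M"
proof -
  have s0: "(\<lambda>x. \<bar>u x\<bar>) summable_on UNIV" using assms unfolding vb_def by auto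
  have s: "(\<lambda>x. \<bar>v x\<bar>) summable_on UNIV"
    by (rule summable_real_cmp[OF s0]) (use assms in auto)
  have "(\<Sum>\<^sub>\<infinity>x. \<bar>v x\<bar>) \<le> (\<Sum>\<^sub>\<infinity>x. \<bar>u x\<bar>)"
    by (rule infsum_mono[OF s s0]) (use assms in auto)
  then show ?thesis using assms s unfolding vb_def by auto
qed

lemma delta_has_sum: "((\<lambda>x. if x = y then c else 0::real) has_sum c) UNIV"
proof -
  have "((\<lambda>x. if x = y then c else 0::real) has_sum (sum (\<lambda>x. if x = y then c else 0::real) {y})) {y}"
    by (rule has_sum_finite) simp
  then have "((\<lambda>x. if x = y then c else 0::real) has_sum c) {y}" by simp
  then show ?thesis
    by (rule has_sum_cong_neutral[THEN iffD1, rotated -1]) auto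
qed

lemma vb_delta: "vb (\<lambda>x. if x = y then 1 else 0) 1"
proof -
  have "(\<lambda>x. \<bar>if x = y then 1 else 0\<bar>::real) = (\<lambda>x. if x = y then 1 else 0)" by auto
  moreover note delta_has_sum[of y 1]
  ultimately show ?thesis unfolding vb_def by (auto simp: has_sum_iff)
qed


lemma wmv:
  fixes A :: "'s \<Rightarrow> 's \<Rightarrow> real" and u :: "'s \<Rightarrow> real"
  assumes As: "\<And>z. (\<lambda>x. w x z * \<bar>A x z\<bar>) summable_on UNIV"
    and Ab: "\<And>z. (\<Sum>\<^sub>\<infinity>x. w x z * \<bar>A x z\<bar>) \<le> a"
    and us: "(\<lambda>z. v z * \<bar>u z\<bar>) summable_on UNIV" and ub: "(\<Sum>\<^sub>\<infinity>z. v z * \<bar>u z\<bar>) \<le> b"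
    and w1: "\<And>x z. w x z \<ge> 1" and v1: "\<And>z. v z \<ge> 1"
    and om: "\<And>x z. om x \<le> w x z * v z" "\<And>x. om x \<ge> 0"
  shows "(\<lambda>z. A x z * u z) summable_on UNIV"
    and "(\<lambda>x. om x * \<bar>mv A u x\<bar>) summable_on UNIV"
    and "(\<Sum>\<^sub>\<infinity>x. om x * \<bar>mv A u x\<bar>) \<le> a * b"
proof -
  define g where "g = (\<lambda>(z,x). v z * \<bar>u z\<bar> * (w x z * \<bar>A x z\<bar>))"
  have gnn: "g p \<ge> 0" for p
  proof -
    obtain z x where p: "p = (z,x)" by (cases p)
    have "v z \<ge> 0" "w x z \<ge> 0" using v1[of z] w1[of x z] by auto
    then show ?thesis unfolding g_def p by auto
  qed
  define G where "G z = v z * \<bar>u z\<bar> * (\<Sum>\<^sub>\<infinity>x. w x z * \<bar>A x z\<bar>)" for z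
  have G: "((\<lambda>x. g (z,x)) has_sum G z) UNIV" for z
    unfolding g_def G_def by (simp, rule has_sum_cmult_right, rule has_sum_infsum[OF As])
  have a0: "a \<ge> 0"
  proof -
    have "0 \<le> (\<Sum>\<^sub>\<infinity>x. w x undefined * \<bar>A x undefined\<bar>)"
      by (rule infsum_nonneg) (metis abs_ge_zero w1 order_trans zero_le_one mult_nonneg_nonneg)
    then show ?thesis using Ab[of undefined] by linarith
  qed
  have Gle: "G z \<le> a * (v z * \<bar>u z\<bar>)" for z
  proof -
    have "v z * \<bar>u z\<bar> \<ge> 0" using v1[of z] by auto
    then have "G z \<le> v z * \<bar>u z\<bar> * a" unfolding G_def by (rule mult_left_mono[OF Ab])
    then show ?thesis by (simp add: algebra_simps)
  qed
  have G0: "G z \<ge> 0" for z using G[of z] gnn by (meson has_sum_nonneg)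
  have aus: "(\<lambda>z. a * (v z * \<bar>u z\<bar>)) summable_on UNIV" by (rule summable_on_cmult_right[OF us])
  have Gs: "G summable_on UNIV"
    by (rule summable_on_comparison_test[OF aus]) (use Gle G0 in auto)
  have gs: "g summable_on UNIV"
  proof -
    have "g summable_on Sigma UNIV (\<lambda>_. UNIV)"
      by (rule summable_on_SigmaI[OF G Gs]) (use gnn in auto)
    then show ?thesis by simp
  qed
  have sumg: "infsum g UNIV = infsum G UNIV"
  proof -
    have "infsum G UNIV = (\<Sum>\<^sub>\<infinity>z. \<Sum>\<^sub>\<infinity>x. g (z,x))"
      by (rule infsum_cong) (metis G infsumI)
    also have "\<dots> = infsum g (Sigma UNIV (\<lambda>_. UNIV))"
      by (rule infsum_Sigma_banach) (use gs in simp)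
    finally show ?thesis by simp
  qed
  have Gsum: "infsum G UNIV \<le> a * b"
  proof -
    have "infsum G UNIV \<le> (\<Sum>\<^sub>\<infinity>z. a * (v z * \<bar>u z\<bar>))"
      by (rule infsum_mono[OF Gs aus]) (use Gle in auto)
    also have "\<dots> = a * (\<Sum>\<^sub>\<infinity>z. v z * \<bar>u z\<bar>)" by (rule infsum_cmult_right')
    also have "\<dots> \<le> a * b" by (rule mult_left_mono[OF ub a0])
    finally show ?thesis .
  qed
  have gs': "(\<lambda>(x,z). g (z,x)) summable_on UNIV \<times> UNIV"
    using gs summable_on_swap[of g UNIV UNIV] by simp
  have slice: "(\<lambda>z. g (z,x)) summable_on UNIV" for x
    using summable_on_SigmaD1[of "\<lambda>x z. g (z,x)" UNIV "\<lambda>_. UNIV" x] gs' by simp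
  define H where "H x = (\<Sum>\<^sub>\<infinity>z. g (z,x))" for x
  have Hs: "H summable_on UNIV"
    unfolding H_def using summable_on_SigmaD[of "\<lambda>(x,z). g (z,x)" UNIV "\<lambda>_. UNIV"] gs' slice by simp
  have sumH: "infsum H UNIV = infsum G UNIV"
  proof -
    have "infsum H UNIV = (\<Sum>\<^sub>\<infinity>z. \<Sum>\<^sub>\<infinity>x. g (z,x))"
      unfolding H_def by (rule infsum_swap_banach) (use gs' in simp)
    also have "\<dots> = infsum G UNIV" by (rule infsum_cong) (metis G infsumI)
    finally show ?thesis .
  qed
  have rowle: "\<bar>A x z * u z\<bar> \<le> g (z,x)" for x z
  proof -
    have "\<bar>A x z * u z\<bar> = 1 * (\<bar>u z\<bar> * \<bar>A x z\<bar>)" by (simp add: abs_mult)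
    also have "\<dots> \<le> (v z * w x z) * (\<bar>u z\<bar> * \<bar>A x z\<bar>)"
    proof (rule mult_right_mono)
      show "1 \<le> v z * w x z" using mult_mono[of 1 "v z" 1 "w x z"] v1[of z] w1[of x z] by simp
    qed simp
    finally show ?thesis by (simp add: g_def algebra_simps)
  qed
  show rs: "(\<lambda>z. A x z * u z) summable_on UNIV" for x
    by (rule summable_real_cmp[OF slice]) (use rowle in auto)
  have omle: "om x * \<bar>mv A u x\<bar> \<le> H x" for x
  proof -
    have "\<bar>mv A u x\<bar> \<le> (\<Sum>\<^sub>\<infinity>z. \<bar>A x z * u z\<bar>)"
      unfolding mv_def by (rule infsum_abs_le) (rule abs_summable_real[THEN iffD2, OF rs])
    then have "om x * \<bar>mv A u x\<bar> \<le> om x * (\<Sum>\<^sub>\<infinity>z. \<bar>A x z * u z\<bar>)"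
      by (rule mult_left_mono) (use om(2) in auto)
    also have "\<dots> = (\<Sum>\<^sub>\<infinity>z. om x * \<bar>A x z * u z\<bar>)" by (rule infsum_cmult_right'[symmetric])
    also have "\<dots> \<le> H x" unfolding H_def
    proof (rule infsum_mono)
      show "(\<lambda>z. om x * \<bar>A x z * u z\<bar>) summable_on UNIV"
        by (rule summable_on_cmult_right) (rule abs_summable_real[THEN iffD2, OF rs])
      show "(\<lambda>z. g (z,x)) summable_on UNIV" by (rule slice)
      fix z
      have "om x * \<bar>A x z * u z\<bar> \<le> (w x z * v z) * (\<bar>u z\<bar> * \<bar>A x z\<bar>)"
      proof -
        have "om x * \<bar>A x z * u z\<bar> = om x * (\<bar>u z\<bar> * \<bar>A x z\<bar>)" by (simp add: abs_mult)
        also have "\<dots> \<le> (w x z * v z) * (\<bar>u z\<bar> * \<bar>A x z\<bar>)"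
          by (rule mult_right_mono[OF om(1)]) simp
        finally show ?thesis .
      qed
      then show "om x * \<bar>A x z * u z\<bar> \<le> g (z,x)" by (simp add: g_def algebra_simps)
    qed
    finally show ?thesis .
  qed
  have omnn: "om x * \<bar>mv A u x\<bar> \<ge> 0" for x using om(2)[of x] by simp
  show s2: "(\<lambda>x. om x * \<bar>mv A u x\<bar>) summable_on UNIV"
    by (rule summable_on_comparison_test[OF Hs]) (use omle omnn in auto)
  have "(\<Sum>\<^sub>\<infinity>x. om x * \<bar>mv A u x\<bar>) \<le> infsum H UNIV"
    by (rule infsum_mono[OF s2 Hs]) (use omle in auto)
  then show "(\<Sum>\<^sub>\<infinity>x. om x * \<bar>mv A u x\<bar>) \<le> a * b" using sumH Gsum by linarith
qed

lemma mv_bound: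
  assumes "cb A a" "vb u b"
  shows "\<And>x. (\<lambda>z. A x z * u z) summable_on UNIV" and "vb (mv A u) (a * b)"
proof -
  have As: "\<And>z. (\<lambda>x. 1 * \<bar>A x z\<bar>) summable_on UNIV" and Ab: "\<And>z. (\<Sum>\<^sub>\<infinity>x. 1 * \<bar>A x z\<bar>) \<le> a"
    using assms(1) by (auto simp: cb_def vb_def)
  have us: "(\<lambda>z. 1 * \<bar>u z\<bar>) summable_on UNIV" and ub: "(\<Sum>\<^sub>\<infinity>z. 1 * \<bar>u z\<bar>) \<le> b"
    using assms(2) by (auto simp: vb_def)
  note W = wmv[of "\<lambda>x z. 1" A a "\<lambda>z. 1" u b "\<lambda>x. 1", OF As Ab us ub]
  show "\<And>x. (\<lambda>z. A x z * u z) summable_on UNIV" using W by auto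
  show "vb (mv A u) (a * b)" using W by (auto simp: vb_def)
qed

lemma mm_bound:
  assumes "cb A a" "cb B b"
  shows "cb (mat_mult A B) (a * b)"
  using mv_bound(2)[OF assms(1)] assms(2) unfolding cb_def mat_mult_mv[abs_def] by blast

lemma vb_row:
  assumes "cb A a" "vb u b"
  shows "(\<lambda>z. \<bar>A x z * u z\<bar>) summable_on UNIV"
  by (rule abs_summable_real[THEN iffD2, OF mv_bound(1)[OF assms]])


lemma cbD: "cb A M \<Longrightarrow> vb (\<lambda>x. A x y) M"
  unfolding cb_def by blast

lemma cbI: "(\<And>y. vb (\<lambda>x. A x y) M) \<Longrightarrow> cb A M"
  unfolding cb_def by blast

lemma fubini_abs:
  fixes f :: "'a \<Rightarrow> 'b \<Rightarrow> real"
  assumes s1: "\<And>z. (\<lambda>x. \<bar>f x z\<bar>) summable_on UNIV"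
    and s2: "(\<lambda>z. \<Sum>\<^sub>\<infinity>x. \<bar>f x z\<bar>) summable_on UNIV"
  shows "(\<lambda>(x,z). f x z) summable_on UNIV \<times> UNIV"
    and "(\<Sum>\<^sub>\<infinity>x. \<Sum>\<^sub>\<infinity>z. f x z) = (\<Sum>\<^sub>\<infinity>z. \<Sum>\<^sub>\<infinity>x. f x z)"
proof -
  have h: "(\<lambda>(z,x). \<bar>f x z\<bar>) summable_on Sigma UNIV (\<lambda>_. UNIV)"
  proof (rule summable_on_SigmaI[where g = "\<lambda>z. \<Sum>\<^sub>\<infinity>x. \<bar>f x z\<bar>"])
    show "((\<lambda>x. case (z, x) of (z, x) \<Rightarrow> \<bar>f x z\<bar>) has_sum (\<Sum>\<^sub>\<infinity>x. \<bar>f x z\<bar>)) UNIV" for z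
      using has_sum_infsum[OF s1[of z]] by simp
  qed (use s2 in auto)
  then have "(\<lambda>(x,z). \<bar>f x z\<bar>) summable_on UNIV \<times> UNIV"
    using summable_on_swap[of "\<lambda>(z,x). \<bar>f x z\<bar>" UNIV UNIV] by (simp add: case_prod_beta)
  then show fs: "(\<lambda>(x,z). f x z) summable_on UNIV \<times> UNIV"
    by (rule summable_real_cmp) auto
  show "(\<Sum>\<^sub>\<infinity>x. \<Sum>\<^sub>\<infinity>z. f x z) = (\<Sum>\<^sub>\<infinity>z. \<Sum>\<^sub>\<infinity>x. f x z)"
    by (rule infsum_swap_banach[OF fs])
qed

lemma colsum:
  assumes A: "cb A a" and u: "vb u b"
  shows "(\<Sum>\<^sub>\<infinity>x. mv A u x) = (\<Sum>\<^sub>\<infinity>z. (\<Sum>\<^sub>\<infinity>x. A x z) * u z)"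
proof -
  have As: "(\<lambda>x. \<bar>A x z\<bar>) summable_on UNIV" "(\<Sum>\<^sub>\<infinity>x. \<bar>A x z\<bar>) \<le> a" for z
    using cbD[OF A, of z] by (auto simp: vb_def)
  have us: "(\<lambda>z. \<bar>u z\<bar>) summable_on UNIV" using u by (auto simp: vb_def)
  have s1: "(\<lambda>x. \<bar>A x z * u z\<bar>) summable_on UNIV" for z
    unfolding abs_mult by (rule summable_on_cmult_left[OF As(1)])
  have eq: "(\<Sum>\<^sub>\<infinity>x. \<bar>A x z * u z\<bar>) = (\<Sum>\<^sub>\<infinity>x. \<bar>A x z\<bar>) * \<bar>u z\<bar>" for z
    unfolding abs_mult by (rule infsum_cmult_left')
  have s2: "(\<lambda>z. \<Sum>\<^sub>\<infinity>x. \<bar>A x z * u z\<bar>) summable_on UNIV"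
  proof (rule summable_on_comparison_test[OF summable_on_cmult_right[OF us, of a]])
    fix z
    show "(\<Sum>\<^sub>\<infinity>x. \<bar>A x z * u z\<bar>) \<le> a * \<bar>u z\<bar>" unfolding eq
      by (rule mult_right_mono[OF As(2)]) simp
    show "0 \<le> (\<Sum>\<^sub>\<infinity>x. \<bar>A x z * u z\<bar>)" by (rule infsum_nonneg) simp
  qed
  have "(\<Sum>\<^sub>\<infinity>x. mv A u x) = (\<Sum>\<^sub>\<infinity>x. \<Sum>\<^sub>\<infinity>z. A x z * u z)" by (simp add: mv_def)
  also have "\<dots> = (\<Sum>\<^sub>\<infinity>z. \<Sum>\<^sub>\<infinity>x. A x z * u z)"
    by (rule fubini_abs(2)[OF s1 s2])
  also have "\<dots> = (\<Sum>\<^sub>\<infinity>z. (\<Sum>\<^sub>\<infinity>x. A x z) * u z)"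
    by (rule infsum_cong) (rule infsum_cmult_left')
  finally show ?thesis .
qed

lemma mv_assoc:
  assumes A: "cb A a" and B: "cb B b" and u: "vb u c"
  shows "mv A (mv B u) = mv (mat_mult A B) u"
proof
  fix x
  have Bs: "(\<lambda>z. \<bar>B z k\<bar>) summable_on UNIV" "(\<Sum>\<^sub>\<infinity>z. \<bar>B z k\<bar>) \<le> b" for k
    using cbD[OF B, of k] by (auto simp: vb_def)
  have Ae: "\<bar>A x z\<bar> \<le> a" for z using vb_entry[OF cbD[OF A]] by blast
  have a0: "a \<ge> 0" using Ae[of x] by linarith
  have us: "(\<lambda>k. \<bar>u k\<bar>) summable_on UNIV" using u by (auto simp: vb_def)
  define f where "f z k = A x z * (B z k * u k)" for z k
  have le1: "\<bar>f z k\<bar> \<le> a * \<bar>u k\<bar> * \<bar>B z k\<bar>" for z k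
  proof -
    have "\<bar>f z k\<bar> = \<bar>A x z\<bar> * (\<bar>u k\<bar> * \<bar>B z k\<bar>)" by (simp add: f_def abs_mult)
    also have "\<dots> \<le> a * (\<bar>u k\<bar> * \<bar>B z k\<bar>)" by (rule mult_right_mono[OF Ae]) simp
    finally show ?thesis by (simp add: algebra_simps)
  qed
  have cs: "(\<lambda>z. a * \<bar>u k\<bar> * \<bar>B z k\<bar>) summable_on UNIV" for k
    by (rule summable_on_cmult_right[OF Bs(1)])
  have s1: "(\<lambda>z. \<bar>f z k\<bar>) summable_on UNIV" for k
    by (rule summable_on_comparison_test[OF cs[of k]]) (use le1 in auto)
  have le2: "(\<Sum>\<^sub>\<infinity>z. \<bar>f z k\<bar>) \<le> (a*b) * \<bar>u k\<bar>" for k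
  proof -
    have "(\<Sum>\<^sub>\<infinity>z. \<bar>f z k\<bar>) \<le> (\<Sum>\<^sub>\<infinity>z. a * \<bar>u k\<bar> * \<bar>B z k\<bar>)"
      by (rule infsum_mono[OF s1 cs]) (use le1 in auto)
    also have "\<dots> = a * \<bar>u k\<bar> * (\<Sum>\<^sub>\<infinity>z. \<bar>B z k\<bar>)" by (rule infsum_cmult_right')
    also have "\<dots> \<le> a * \<bar>u k\<bar> * b" by (rule mult_left_mono[OF Bs(2)]) (use a0 in simp)
    finally show ?thesis by (simp add: algebra_simps)
  qed
  have s2: "(\<lambda>k. \<Sum>\<^sub>\<infinity>z. \<bar>f z k\<bar>) summable_on UNIV"
    by (rule summable_on_comparison_test[OF summable_on_cmult_right[OF us, of "a*b"]])
       (use le2 in \<open>auto intro: infsum_nonneg\<close>)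
  have "mv A (mv B u) x = (\<Sum>\<^sub>\<infinity>z. \<Sum>\<^sub>\<infinity>k. f z k)"
    unfolding mv_def f_def by (rule infsum_cong) (rule infsum_cmult_right'[symmetric])
  also have "\<dots> = (\<Sum>\<^sub>\<infinity>k. \<Sum>\<^sub>\<infinity>z. f z k)" by (rule fubini_abs(2)[OF s1 s2])
  also have "\<dots> = mv (mat_mult A B) u x"
    unfolding mv_def mat_mult_def f_def
  proof (rule infsum_cong)
    fix k
    have "(\<Sum>\<^sub>\<infinity>z. A x z * (B z k * u k)) = (\<Sum>\<^sub>\<infinity>z. A x z * B z k * u k)" by (simp add: mult.assoc)
    also have "\<dots> = (\<Sum>\<^sub>\<infinity>z. A x z * B z k) * u k" by (rule infsum_cmult_left')
    finally show "(\<Sum>\<^sub>\<infinity>z. A x z * (B z k * u k)) = (\<Sum>\<^sub>\<infinity>z. A x z * B z k) * u k" .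
  qed
  finally show "mv A (mv B u) x = mv (mat_mult A B) u x" .
qed

lemma mm_assoc:
  assumes "cb A a" "cb B b" "cb C c"
  shows "mat_mult (mat_mult A B) C = mat_mult A (mat_mult B C)"
proof (intro ext)
  fix x y
  have u: "vb (\<lambda>z. C z y) c" by (rule cbD[OF assms(3)])
  have "mat_mult A (mat_mult B C) x y = mv A (mv B (\<lambda>z. C z y)) x"
    by (simp add: mat_mult_mv[abs_def])
  also have "\<dots> = mv (mat_mult A B) (\<lambda>z. C z y) x" using mv_assoc[OF assms(1,2) u] by simp
  finally show "mat_mult (mat_mult A B) C x y = mat_mult A (mat_mult B C) x y"
    by (simp add: mat_mult_mv)
qed

lemma mv_diff:
  assumes "cb A a" "vb u b" "vb u' b'"
  shows "mv A (\<lambda>z. u z - u' z) x = mv A u x - mv A u' x"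
  unfolding mv_def right_diff_distrib
  by (rule infsum_diff'[OF mv_bound(1)[OF assms(1,2)] mv_bound(1)[OF assms(1,3)]])

lemma mv_diff_left:
  assumes "cb A a" "cb A' a'" "vb u b"
  shows "mv (\<lambda>x z. A x z - A' x z) u x = mv A u x - mv A' u x"
  unfolding mv_def left_diff_distrib
  by (rule infsum_diff'[OF mv_bound(1)[OF assms(1,3)] mv_bound(1)[OF assms(2,3)]])

lemma mv_scale: "mv A (\<lambda>z. c * u z) x = c * mv A u x"
  unfolding mv_def by (simp add: infsum_cmult_right'[symmetric] algebra_simps)

lemma mv_id: "mv id_mat u = u"
proof
  fix x
  have "mv id_mat u x = (\<Sum>\<^sub>\<infinity>z. if z = x then u x else 0)"
    unfolding mv_def id_mat_def by (rule infsum_cong) auto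
  also have "\<dots> = u x" by (rule infsumI[OF delta_has_sum])
  finally show "mv id_mat u x = u x" .
qed

lemma mv_delta: "mv A (\<lambda>z. if z = y then 1 else 0) x = A x y"
proof -
  have "mv A (\<lambda>z. if z = y then 1 else 0) x = (\<Sum>\<^sub>\<infinity>z. if z = y then A x y else 0)"
    unfolding mv_def by (rule infsum_cong) auto
  also have "\<dots> = A x y" by (rule infsumI[OF delta_has_sum])
  finally show ?thesis .
qed

lemma mm_id_left: "mat_mult id_mat A = A"
  by (intro ext) (simp add: mat_mult_mv mv_id)

lemma mm_id_right: "mat_mult (A::'d smat) id_mat = A"
proof (intro ext)
  fix x y :: "int \<times> 'd"
  have "(\<lambda>z. id_mat z y) = (\<lambda>z. if z = y then 1 else 0)" by (auto simp: id_mat_def)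
  then show "mat_mult A id_mat x y = A x y" by (simp add: mat_mult_mv mv_delta)
qed

lemma cb_id: "cb (id_mat::'d smat) 1"
proof (rule cbI)
  fix y :: "int \<times> 'd"
  have "(\<lambda>x. id_mat x y) = (\<lambda>x. if x = y then 1 else 0::real)" by (auto simp: id_mat_def)
  then show "vb (\<lambda>x. id_mat x y) 1" using vb_delta by simp
qed


lemma exps_nat: "c > 0 \<Longrightarrow> (\<lambda>n::nat. exp (-c * real n)) summable_on UNIV"
proof -
  assume c: "c > 0"
  have "summable (\<lambda>n::nat. exp (-c) ^ n)" by (rule summable_geometric) (use c in simp)
  moreover have "exp (-c * real n) = exp (-c) ^ n" for n
    using exp_of_nat_mult[of n "-c"] by (simp add: algebra_simps)
  ultimately have "summable (\<lambda>n::nat. exp (-c * real n))" by simp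
  then show ?thesis by (subst summable_on_UNIV_nonneg_real_iff) auto
qed

lemma exps_int: "c > 0 \<Longrightarrow> (\<lambda>k::int. exp (-c * real_of_int \<bar>k\<bar>)) summable_on UNIV"
proof -
  assume c: "c > 0"
  let ?f = "\<lambda>k::int. exp (-c * real_of_int \<bar>k\<bar>)"
  have U: "UNIV = range (\<lambda>n::nat. int n) \<union> range (\<lambda>n::nat. - int n - 1)"
  proof -
    have "k \<in> range (\<lambda>n::nat. int n) \<union> range (\<lambda>n::nat. - int n - 1)" for k :: int
    proof (cases "k \<ge> 0")
      case True then show ?thesis by (auto intro: image_eqI[of _ _ "nat k"])
    next
      case False then have "k = - int (nat (-k-1)) - 1" by simp
      then show ?thesis by blast
    qed
    then show ?thesis by blast
  qed
  have s1: "?f summable_on range (\<lambda>n::nat. int n)"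
  proof (subst summable_on_reindex)
    show "inj_on (\<lambda>n::nat. int n) UNIV" by (auto simp: inj_on_def)
    show "(?f \<circ> (\<lambda>n::nat. int n)) summable_on UNIV"
      by (rule summable_on_cong[THEN iffD2, OF _ exps_nat[OF c]]) simp
  qed
  have s2: "?f summable_on range (\<lambda>n::nat. - int n - 1)"
  proof (subst summable_on_reindex)
    show "inj_on (\<lambda>n::nat. - int n - 1) UNIV" by (auto simp: inj_on_def)
    show "(?f \<circ> (\<lambda>n::nat. - int n - 1)) summable_on UNIV"
    proof (rule summable_on_comparison_test[OF exps_nat[OF c]])
      fix n :: nat
      have "\<bar>- int n - 1\<bar> = int n + 1" by simp
      then have "(?f \<circ> (\<lambda>n::nat. - int n - 1)) n = exp (-c * (real n + 1))" by simp
      also have "\<dots> \<le> exp (-c * real n)" using c by (simp add: algebra_simps)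
      finally show "(?f \<circ> (\<lambda>n::nat. - int n - 1)) n \<le> exp (-c * real n)" .
    qed auto
  qed
  show ?thesis by (subst U) (rule summable_on_union[OF s1 s2])
qed

definition E1 :: "real \<Rightarrow> real" where
  "E1 c = (\<Sum>\<^sub>\<infinity>k::int. exp (-c * real_of_int \<bar>k\<bar>))"

lemma exps_shift:
  assumes c: "c > 0"
  shows "(\<lambda>k::int. exp (-c * real_of_int \<bar>k - j\<bar>)) summable_on UNIV"
    and "(\<Sum>\<^sub>\<infinity>k::int. exp (-c * real_of_int \<bar>k - j\<bar>)) = E1 c"
proof -
  have b: "bij_betw (\<lambda>k. k - j) UNIV (UNIV::int set)"
    by (rule bij_betwI[of _ _ _ "\<lambda>k. k + j"]) auto
  show "(\<lambda>k::int. exp (-c * real_of_int \<bar>k - j\<bar>)) summable_on UNIV"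
    using summable_on_reindex_bij_betw[OF b, of "\<lambda>k. exp (-c * real_of_int \<bar>k\<bar>)"] exps_int[OF c] by simp
  show "(\<Sum>\<^sub>\<infinity>k::int. exp (-c * real_of_int \<bar>k - j\<bar>)) = E1 c"
    unfolding E1_def using infsum_reindex_bij_betw[OF b, of "\<lambda>k. exp (-c * real_of_int \<bar>k\<bar>)"] by simp
qed

lemma E1_pos: "c > 0 \<Longrightarrow> E1 c \<ge> 0"
  unfolding E1_def by (rule infsum_nonneg) simp

lemma exps_prod:
  assumes c: "c > 0"
  shows "(\<lambda>x::int \<times> 'd::finite. exp (-c * real_of_int \<bar>fst x - j\<bar>)) summable_on UNIV"
    and "(\<Sum>\<^sub>\<infinity>x::int \<times> 'd. exp (-c * real_of_int \<bar>fst x - j\<bar>)) = real CARD('d) * E1 c"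
proof -
  let ?g = "\<lambda>k::int. real CARD('d) * exp (-c * real_of_int \<bar>k - j\<bar>)"
  let ?f = "\<lambda>x::int \<times> 'd. exp (-c * real_of_int \<bar>fst x - j\<bar>)"
  have h: "((\<lambda>a. ?f (k,a)) has_sum ?g k) UNIV" for k
  proof -
    have "((\<lambda>a. ?f (k,a)) has_sum (sum (\<lambda>a. ?f (k,a)) UNIV)) UNIV" by (rule has_sum_finite) simp
    then show ?thesis by simp
  qed
  have gs: "?g summable_on UNIV" by (rule summable_on_cmult_right[OF exps_shift(1)[OF c]])
  have fs: "?f summable_on Sigma UNIV (\<lambda>_. UNIV)"
    by (rule summable_on_SigmaI[OF h gs]) auto
  then show "?f summable_on UNIV" by simp
  have "(\<Sum>\<^sub>\<infinity>x. ?f x) = (\<Sum>\<^sub>\<infinity>k. \<Sum>\<^sub>\<infinity>a. ?f (k,a))"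
    using infsum_Sigma_banach[of ?f UNIV "\<lambda>_. UNIV"] fs by simp
  also have "\<dots> = (\<Sum>\<^sub>\<infinity>k. ?g k)" by (rule infsum_cong) (rule infsumI[OF h])
  also have "\<dots> = real CARD('d) * E1 c" by (simp only: infsum_cmult_right' exps_shift(2)[OF c])
  finally show "(\<Sum>\<^sub>\<infinity>x. ?f x) = real CARD('d) * E1 c" .
qed


lemma infsum_nat_shift:
  fixes a :: "nat \<Rightarrow> real"
  assumes s: "summable (\<lambda>n. \<bar>a n\<bar>)"
  shows "infsum a UNIV = suminf a" and "infsum (\<lambda>n. a (Suc n)) UNIV = suminf a - a 0"
proof -
  have sn: "summable (\<lambda>n. norm (a n))" using s by simp
  have sa: "summable a" using summable_norm_cancel[OF sn] .
  show "infsum a UNIV = suminf a"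
    by (rule infsumI[OF norm_summable_imp_has_sum[OF sn summable_sums[OF sa]]])
  have sn2: "summable (\<lambda>n. norm (a (Suc n)))" using sn by (subst summable_Suc_iff)
  have "(\<lambda>n. a (Suc n)) sums (suminf a - a 0)"
    by (subst sums_Suc_iff) (simp add: summable_sums[OF sa])
  then show "infsum (\<lambda>n. a (Suc n)) UNIV = suminf a - a 0"
    by (rule infsumI[OF norm_summable_imp_has_sum[OF sn2]])
qed

lemma geom_summable_on: "0 \<le> (q::real) \<Longrightarrow> q < 1 \<Longrightarrow> (\<lambda>n::nat. q ^ n) summable_on UNIV"
  by (rule summable_nonneg_imp_summable_on) (auto intro: summable_geometric)

lemma geom_infsum: "0 \<le> (q::real) \<Longrightarrow> q < 1 \<Longrightarrow> (\<Sum>\<^sub>\<infinity>n::nat. q ^ n) = 1 / (1 - q)"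
proof -
  assume q: "0 \<le> q" "q < 1"
  have "summable (\<lambda>n. \<bar>q ^ n\<bar>)" using q by (auto intro: summable_geometric)
  then have "(\<Sum>\<^sub>\<infinity>n::nat. q ^ n) = suminf (\<lambda>n. q ^ n)" by (rule infsum_nat_shift(1))
  also have "\<dots> = 1 / (1 - q)" using q by (intro suminf_geometric) simp
  finally show ?thesis .
qed

lemma prod_local:
  fixes A B :: "'d::finite smat"
  assumes al: "\<alpha> > 0" and be: "\<beta> > 0"
    and Ab: "\<And>x z. \<bar>A x z\<bar> \<le> a * exp (-\<alpha> * real_of_int \<bar>fst x - fst z\<bar>)"
    and Bb: "\<And>z y. \<bar>B z y\<bar> \<le> b * exp (-\<beta> * real_of_int \<bar>fst z - fst y\<bar>)"
  shows "\<bar>mat_mult A B x y\<bar> \<le> (a * b * (real CARD('d) * E1 (min \<alpha> \<beta> / 2))) * exp (- (min \<alpha> \<beta> / 2) * real_of_int \<bar>fst x - fst y\<bar>)"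
proof -
  define \<gamma> where "\<gamma> = min \<alpha> \<beta> / 2"
  have g: "\<gamma> > 0" "2*\<gamma> \<le> \<alpha>" "2*\<gamma> \<le> \<beta>" using al be by (auto simp: \<gamma>_def)
  have "\<bar>A x x\<bar> \<le> a" using Ab[of x x] by simp
  then have a0: "a \<ge> 0" by linarith
  have "\<bar>B y y\<bar> \<le> b" using Bb[of y y] by simp
  then have b0: "b \<ge> 0" by linarith
  define i where "i = fst x"
  define j where "j = fst y"
  define g where "g z = (a * b * exp (-\<gamma> * real_of_int \<bar>i - j\<bar>)) * exp (-\<gamma> * real_of_int \<bar>fst z - i\<bar>)" for z :: "int \<times> 'd"
  have tb: "\<bar>A x z * B z y\<bar> \<le> g z" for z
  proof -
    define d1 where "d1 = real_of_int \<bar>i - fst z\<bar>"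
    define d2 where "d2 = real_of_int \<bar>fst z - j\<bar>"
    have d: "d1 \<ge> 0" "d2 \<ge> 0" "real_of_int \<bar>i - j\<bar> \<le> d1 + d2" by (auto simp: d1_def d2_def)
    have "\<bar>A x z * B z y\<bar> = \<bar>A x z\<bar> * \<bar>B z y\<bar>" by (simp add: abs_mult)
    also have "\<dots> \<le> (a * exp (-\<alpha> * d1)) * (b * exp (-\<beta> * d2))"
      using Ab[of x z] Bb[of z y] by (intro mult_mono) (auto simp: d1_def d2_def i_def j_def a0)
    also have "\<dots> \<le> (a * exp (-(2*\<gamma>) * d1)) * (b * exp (-(2*\<gamma>) * d2))"
      using g d a0 b0 by (intro mult_mono mult_left_mono) (auto intro: mult_right_mono)
    also have "\<dots> = a * b * exp (-(2*\<gamma>) * (d1 + d2))" by (simp add: exp_add[symmetric] algebra_simps)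
    also have "\<dots> \<le> a * b * exp (-\<gamma> * real_of_int \<bar>i - j\<bar> + -\<gamma> * d1)"
    proof (rule mult_left_mono)
      have h1: "\<gamma> * real_of_int \<bar>i - j\<bar> \<le> \<gamma> * (d1 + d2)" using d g by (intro mult_left_mono) auto
      have h2: "0 \<le> \<gamma> * d2" using d g by simp
      define D where "D = real_of_int \<bar>i - j\<bar>"
      have e: "(-\<gamma> * D + -\<gamma> * d1) - (-(2*\<gamma>) * (d1 + d2)) = (\<gamma> * (d1 + d2) - \<gamma> * D) + \<gamma> * d2"
        by (simp add: algebra_simps)
      have "(\<gamma> * (d1 + d2) - \<gamma> * D) + \<gamma> * d2 \<ge> 0" using h1 h2 unfolding D_def by linarith
      then have "-(2*\<gamma>) * (d1 + d2) \<le> -\<gamma> * D + -\<gamma> * d1" using e by linarith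
      then show "exp (-(2*\<gamma>) * (d1 + d2)) \<le> exp (-\<gamma> * real_of_int \<bar>i - j\<bar> + -\<gamma> * d1)"
        unfolding D_def by simp
    qed (use a0 b0 in simp)
    also have "\<dots> = g z" unfolding g_def exp_add d1_def by (simp add: abs_minus_commute algebra_simps)
    finally show ?thesis .
  qed
  have gs: "g summable_on UNIV" unfolding g_def by (rule summable_on_cmult_right[OF exps_prod(1)[OF g(1)]])
  have "\<bar>mat_mult A B x y\<bar> \<le> infsum g UNIV" unfolding mat_mult_def
    by (rule infsum_le_cmp[OF gs]) (use tb in auto)
  also have "infsum g UNIV = (a * b * exp (-\<gamma> * real_of_int \<bar>i - j\<bar>)) * (real CARD('d) * E1 \<gamma>)"
    unfolding g_def by (simp only: infsum_cmult_right' exps_prod(2)[OF g(1)])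
  finally show ?thesis by (simp add: \<gamma>_def i_def j_def algebra_simps)
qed

lemma inv_prod:
  fixes A B :: "'d smat"
  assumes A: "cb A a" and B: "cb B b" and SA: "cb SA sa" and SB: "cb SB sb"
    and iA: "mat_mult SA A = id_mat" "mat_mult A SA = id_mat"
    and iB: "mat_mult SB B = id_mat" "mat_mult B SB = id_mat"
  shows "cb (mat_mult SB SA) (sb * sa)" "mat_mult (mat_mult SB SA) (mat_mult A B) = id_mat"
    "mat_mult (mat_mult A B) (mat_mult SB SA) = id_mat"
proof -
  show "cb (mat_mult SB SA) (sb * sa)" by (rule mm_bound[OF SB SA])
  have "mat_mult (mat_mult SB SA) (mat_mult A B) = mat_mult SB (mat_mult SA (mat_mult A B))"
    by (rule mm_assoc[OF SB SA mm_bound[OF A B]])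
  also have "mat_mult SA (mat_mult A B) = mat_mult (mat_mult SA A) B" by (rule mm_assoc[OF SA A B, symmetric])
  finally show "mat_mult (mat_mult SB SA) (mat_mult A B) = id_mat" using iA iB by (simp add: mm_id_left)
  have "mat_mult (mat_mult A B) (mat_mult SB SA) = mat_mult A (mat_mult B (mat_mult SB SA))"
    by (rule mm_assoc[OF A B mm_bound[OF SB SA]])
  also have "mat_mult B (mat_mult SB SA) = mat_mult (mat_mult B SB) SA" by (rule mm_assoc[OF B SB SA, symmetric])
  finally show "mat_mult (mat_mult A B) (mat_mult SB SA) = id_mat" using iA iB by (simp add: mm_id_left)
qed


primrec pw :: "'d smat \<Rightarrow> nat \<Rightarrow> 'd smat" where
  "pw X 0 = id_mat" | "pw X (Suc n) = mat_mult X (pw X n)"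

lemma pw_bound: "cb X \<theta> \<Longrightarrow> cb (pw X n) (\<theta>^n)"
proof (induction n)
  case 0 then show ?case using cb_id by simp
next
  case (Suc n) then show ?case using mm_bound[of X \<theta> "pw X n" "\<theta>^n"] by simp
qed

lemma pw_Suc': "cb X \<theta> \<Longrightarrow> pw X (Suc n) = mat_mult (pw X n) X"
proof (induction n)
  case 0 then show ?case by (simp add: mm_id_left mm_id_right)
next
  case (Suc n)
  have "pw X (Suc (Suc n)) = mat_mult X (mat_mult (pw X n) X)" using Suc by simp
  also have "\<dots> = mat_mult (mat_mult X (pw X n)) X"
    by (rule mm_assoc[OF Suc.prems pw_bound[OF Suc.prems] Suc.prems, symmetric])
  finally show ?case by simp
qed

lemma neumann:
  fixes X :: "'d smat"
  assumes X: "cb X \<theta>" and th: "\<theta> \<le> 1/2"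
  shows "\<exists>S. cb S 2 \<and> mat_mult S (\<lambda>x y. id_mat x y - X x y) = id_mat
            \<and> mat_mult (\<lambda>x y. id_mat x y - X x y) S = id_mat"
proof -
  have t0: "\<theta> \<ge> 0" using vb_nonneg[OF cbD[OF X]] .
  define S where "S x y = (\<Sum>\<^sub>\<infinity>n. pw X n x y)" for x y
  have pwb: "cb (pw X n) (\<theta>^n)" for n by (rule pw_bound[OF X])
  have pwe: "\<bar>pw X n x y\<bar> \<le> \<theta>^n" for n x y by (rule vb_entry[OF cbD[OF pwb]])
  have gs: "(\<lambda>n. \<theta>^n) summable_on UNIV" by (rule geom_summable_on) (use t0 th in auto)
  have gsum: "(\<Sum>\<^sub>\<infinity>n. \<theta>^n) \<le> 2"
  proof -
    have "(\<Sum>\<^sub>\<infinity>n. \<theta>^n) = 1 / (1 - \<theta>)" by (rule geom_infsum) (use t0 th in auto)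
    also have "\<dots> \<le> 2" using t0 th by (simp add: field_simps)
    finally show ?thesis .
  qed
  have gs2: "(\<lambda>n. \<theta> * \<theta>^n) summable_on UNIV" by (rule summable_on_cmult_right[OF gs])
  have ser: "summable (\<lambda>n. \<bar>pw X n x y\<bar>)" for x y
    by (rule summable_comparison_test[of _ "\<lambda>n. \<theta>^n"]) (use pwe t0 th in \<open>auto intro: summable_geometric\<close>)
  have shift: "(\<Sum>\<^sub>\<infinity>n. pw X (Suc n) x y) = S x y - id_mat x y" for x y
    using infsum_nat_shift[OF ser[of x y]] by (simp add: S_def)
  have Sb: "cb S 2"
  proof (rule cbI)
    fix y
    define f where "f x n = \<bar>pw X n x y\<bar>" for x n
    have f1: "(\<lambda>x. \<bar>f x n\<bar>) summable_on UNIV" for n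
      using cbD[OF pwb, of n y] by (simp add: f_def vb_def)
    have fle: "(\<Sum>\<^sub>\<infinity>x. \<bar>f x n\<bar>) \<le> \<theta>^n" for n
      using cbD[OF pwb, of n y] by (simp add: f_def vb_def)
    have f2: "(\<lambda>n. \<Sum>\<^sub>\<infinity>x. \<bar>f x n\<bar>) summable_on UNIV"
      by (rule summable_on_comparison_test[OF gs]) (use fle in \<open>auto intro: infsum_nonneg\<close>)
    have J: "(\<lambda>(x,n). f x n) summable_on Sigma UNIV (\<lambda>_. UNIV)" using fubini_abs(1)[OF f1 f2] by simp
    have sl: "(\<lambda>n. f x n) summable_on UNIV" for x
      by (rule summable_on_comparison_test[OF gs]) (use pwe in \<open>auto simp: f_def\<close>)
    define H where "H x = (\<Sum>\<^sub>\<infinity>n. f x n)" for x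
    have Hs: "H summable_on UNIV" unfolding H_def
      using summable_on_SigmaD[OF J] sl by simp
    have SH: "\<bar>S x y\<bar> \<le> H x" for x
      unfolding S_def H_def f_def by (rule infsum_abs_le) (use sl in \<open>simp add: f_def\<close>)
    have s1: "(\<lambda>x. \<bar>S x y\<bar>) summable_on UNIV"
      by (rule summable_on_comparison_test[OF Hs]) (use SH in auto)
    have "(\<Sum>\<^sub>\<infinity>x. \<bar>S x y\<bar>) \<le> infsum H UNIV" by (rule infsum_mono[OF s1 Hs]) (use SH in auto)
    also have "infsum H UNIV = (\<Sum>\<^sub>\<infinity>n. \<Sum>\<^sub>\<infinity>x. f x n)" unfolding H_def by (rule fubini_abs(2)[OF f1 f2])
    also have "\<dots> \<le> (\<Sum>\<^sub>\<infinity>n. \<theta>^n)"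
      by (rule infsum_mono[OF _ gs]) (use f2 fle in \<open>auto simp: f_def\<close>)
    finally show "vb (\<lambda>x. S x y) 2" using s1 gsum unfolding vb_def by auto
  qed
  have XS: "mv X (\<lambda>z. S z y) x = S x y - id_mat x y" for x y
  proof -
    define f where "f z n = X x z * pw X n z y" for z n
    have f1: "(\<lambda>z. \<bar>f z n\<bar>) summable_on UNIV" for n
      unfolding f_def by (rule vb_row[OF X cbD[OF pwb]])
    have fle: "(\<Sum>\<^sub>\<infinity>z. \<bar>f z n\<bar>) \<le> \<theta> * \<theta>^n" for n
    proof -
      have c: "(\<lambda>z. \<theta> * \<bar>pw X n z y\<bar>) summable_on UNIV"
        using cbD[OF pwb, of n y] by (auto simp: vb_def intro: summable_on_cmult_right)
      have "(\<Sum>\<^sub>\<infinity>z. \<bar>f z n\<bar>) \<le> (\<Sum>\<^sub>\<infinity>z. \<theta> * \<bar>pw X n z y\<bar>)"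
      proof (rule infsum_mono[OF f1 c])
        fix z show "\<bar>f z n\<bar> \<le> \<theta> * \<bar>pw X n z y\<bar>" unfolding f_def abs_mult
          by (rule mult_right_mono[OF vb_entry[OF cbD[OF X]]]) simp
      qed
      also have "\<dots> = \<theta> * (\<Sum>\<^sub>\<infinity>z. \<bar>pw X n z y\<bar>)" by (rule infsum_cmult_right')
      also have "\<dots> \<le> \<theta> * \<theta>^n" using cbD[OF pwb, of n y] t0 by (auto simp: vb_def intro: mult_left_mono)
      finally show ?thesis .
    qed
    have f2: "(\<lambda>n. \<Sum>\<^sub>\<infinity>z. \<bar>f z n\<bar>) summable_on UNIV"
      by (rule summable_on_comparison_test[OF gs2]) (use fle in \<open>auto intro: infsum_nonneg\<close>)
    have "mv X (\<lambda>z. S z y) x = (\<Sum>\<^sub>\<infinity>z. \<Sum>\<^sub>\<infinity>n. f z n)"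
      unfolding mv_def S_def f_def by (rule infsum_cong) (rule infsum_cmult_right'[symmetric])
    also have "\<dots> = (\<Sum>\<^sub>\<infinity>n. \<Sum>\<^sub>\<infinity>z. f z n)" by (rule fubini_abs(2)[OF f1 f2])
    also have "\<dots> = (\<Sum>\<^sub>\<infinity>n. pw X (Suc n) x y)"
      by (rule infsum_cong) (simp add: f_def mat_mult_def)
    finally show ?thesis using shift by simp
  qed
  have SX: "mv S (\<lambda>z. X z y) x = S x y - id_mat x y" for x y
  proof -
    define f where "f z n = pw X n x z * X z y" for z n
    have f1: "(\<lambda>z. \<bar>f z n\<bar>) summable_on UNIV" for n
      unfolding f_def by (rule vb_row[OF pwb cbD[OF X]])
    have fle: "(\<Sum>\<^sub>\<infinity>z. \<bar>f z n\<bar>) \<le> \<theta> * \<theta>^n" for n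
    proof -
      have c: "(\<lambda>z. \<theta>^n * \<bar>X z y\<bar>) summable_on UNIV"
        using cbD[OF X, of y] by (auto simp: vb_def intro: summable_on_cmult_right)
      have "(\<Sum>\<^sub>\<infinity>z. \<bar>f z n\<bar>) \<le> (\<Sum>\<^sub>\<infinity>z. \<theta>^n * \<bar>X z y\<bar>)"
      proof (rule infsum_mono[OF f1 c])
        fix z show "\<bar>f z n\<bar> \<le> \<theta>^n * \<bar>X z y\<bar>" unfolding f_def abs_mult
          by (rule mult_right_mono[OF pwe]) simp
      qed
      also have "\<dots> = \<theta>^n * (\<Sum>\<^sub>\<infinity>z. \<bar>X z y\<bar>)" by (rule infsum_cmult_right')
      also have "\<dots> \<le> \<theta>^n * \<theta>" using cbD[OF X, of y] t0 by (auto simp: vb_def intro: mult_left_mono)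
      finally show ?thesis by (simp add: algebra_simps)
    qed
    have f2: "(\<lambda>n. \<Sum>\<^sub>\<infinity>z. \<bar>f z n\<bar>) summable_on UNIV"
      by (rule summable_on_comparison_test[OF gs2]) (use fle in \<open>auto intro: infsum_nonneg\<close>)
    have "mv S (\<lambda>z. X z y) x = (\<Sum>\<^sub>\<infinity>z. \<Sum>\<^sub>\<infinity>n. f z n)"
      unfolding mv_def S_def f_def by (rule infsum_cong) (rule infsum_cmult_left'[symmetric])
    also have "\<dots> = (\<Sum>\<^sub>\<infinity>n. \<Sum>\<^sub>\<infinity>z. f z n)" by (rule fubini_abs(2)[OF f1 f2])
    also have "\<dots> = (\<Sum>\<^sub>\<infinity>n. pw X (Suc n) x y)"
      by (rule infsum_cong) (simp add: f_def mat_mult_def pw_Suc'[OF X] del: pw.simps)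
    finally show ?thesis using shift by simp
  qed
  have L: "mat_mult S (\<lambda>x y. id_mat x y - X x y) = id_mat"
  proof (intro ext)
    fix x y :: "int \<times> 'd"
    have d: "(\<lambda>z. id_mat z y) = (\<lambda>z. if z = y then 1 else 0)" by (auto simp: id_mat_def)
    have "mat_mult S (\<lambda>x y. id_mat x y - X x y) x y = mv S (\<lambda>z. id_mat z y - X z y) x"
      by (simp add: mat_mult_mv)
    also have "\<dots> = mv S (\<lambda>z. id_mat z y) x - mv S (\<lambda>z. X z y) x"
      by (rule mv_diff[OF Sb cbD[OF cb_id] cbD[OF X]])
    also have "mv S (\<lambda>z. id_mat z y) x = S x y" unfolding d by (rule mv_delta)
    finally show "mat_mult S (\<lambda>x y. id_mat x y - X x y) x y = id_mat x y" using SX by simp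
  qed
  have R: "mat_mult (\<lambda>x y. id_mat x y - X x y) S = id_mat"
  proof (intro ext)
    fix x y :: "int \<times> 'd"
    have "mat_mult (\<lambda>x y. id_mat x y - X x y) S x y = mv (\<lambda>x z. id_mat x z - X x z) (\<lambda>z. S z y) x"
      by (simp add: mat_mult_mv)
    also have "\<dots> = mv id_mat (\<lambda>z. S z y) x - mv X (\<lambda>z. S z y) x"
      by (rule mv_diff_left[OF cb_id X cbD[OF Sb]])
    finally show "mat_mult (\<lambda>x y. id_mat x y - X x y) S x y = id_mat x y" using XS by (simp add: mv_id)
  qed
  show ?thesis using Sb L R by blast
qed


lemma wsum:
  fixes u :: "'s \<Rightarrow> real"
  assumes om: "\<And>x. 0 \<le> om x" "\<And>x. om x \<le> W" and us: "(\<lambda>x. \<bar>u x\<bar>) summable_on UNIV"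
  shows "(\<lambda>x. om x * \<bar>u x\<bar>) summable_on UNIV" "(\<Sum>\<^sub>\<infinity>x. om x * \<bar>u x\<bar>) \<le> W * (\<Sum>\<^sub>\<infinity>x. \<bar>u x\<bar>)"
proof -
  have c: "(\<lambda>x. W * \<bar>u x\<bar>) summable_on UNIV" by (rule summable_on_cmult_right[OF us])
  have le: "om x * \<bar>u x\<bar> \<le> W * \<bar>u x\<bar>" for x by (rule mult_right_mono[OF om(2)]) simp
  show s: "(\<lambda>x. om x * \<bar>u x\<bar>) summable_on UNIV"
    by (rule summable_on_comparison_test[OF c]) (use le om in auto)
  have "(\<Sum>\<^sub>\<infinity>x. om x * \<bar>u x\<bar>) \<le> (\<Sum>\<^sub>\<infinity>x. W * \<bar>u x\<bar>)" by (rule infsum_mono[OF s c]) (use le in auto)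
  also have "\<dots> = W * (\<Sum>\<^sub>\<infinity>x. \<bar>u x\<bar>)" by (rule infsum_cmult_right')
  finally show "(\<Sum>\<^sub>\<infinity>x. om x * \<bar>u x\<bar>) \<le> W * (\<Sum>\<^sub>\<infinity>x. \<bar>u x\<bar>)" .
qed

lemma infsum_le3:
  fixes f g k F :: "'s \<Rightarrow> real"
  assumes "f summable_on UNIV" "g summable_on UNIV" "k summable_on UNIV" "F summable_on UNIV"
    and "\<And>x. F x \<le> f x + g x + k x"
  shows "infsum F UNIV \<le> infsum f UNIV + infsum g UNIV + infsum k UNIV"
proof -
  have s: "(\<lambda>x. f x + g x + k x) summable_on UNIV" using assms by (intro summable_on_add)
  have "infsum F UNIV \<le> (\<Sum>\<^sub>\<infinity>x. f x + g x + k x)" by (rule infsum_mono[OF assms(4) s]) (use assms in auto)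
  also have "\<dots> = infsum f UNIV + infsum g UNIV + infsum k UNIV"
    using assms by (simp add: infsum_add summable_on_add)
  finally show ?thesis .
qed

lemma wgron:
  fixes v :: "real \<Rightarrow> 's \<Rightarrow> real" and c om :: "'s \<Rightarrow> real" and R :: "real \<Rightarrow> 's \<Rightarrow> 's \<Rightarrow> real"
  assumes ab: "a \<le> b" and K: "finite K"
    and om1: "\<And>x. 1 \<le> om x" and omW: "\<And>x. om x \<le> W"
    and vs: "\<And>s. s \<in> {a..b} \<Longrightarrow> (\<lambda>x. \<bar>v s x\<bar>) summable_on UNIV"
    and cs: "(\<lambda>x. \<bar>c x\<bar>) summable_on UNIV"
    and cont: "\<And>s e. s \<in> {a..b} \<Longrightarrow> e > 0 \<Longrightarrow> \<exists>d>0. \<forall>s'\<in>{a..b}. \<bar>s' - s\<bar> < d \<longrightarrow> vb (\<lambda>x. v s' x - v s x) e"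
    and der: "\<And>s e. s \<in> {a..<b} - K \<Longrightarrow> e > 0 \<Longrightarrow> \<exists>d>0. \<forall>h. 0 < h \<and> h < d \<and> s + h \<le> b \<longrightarrow>
                 vb (\<lambda>x. v (s+h) x - v s x - h * mv (R s) (v s) x) (h*e)"
    and Rw: "\<And>s u. s \<in> {a..b} \<Longrightarrow> (\<lambda>z. om z * \<bar>u z\<bar>) summable_on UNIV \<Longrightarrow>
               (\<lambda>x. om x * \<bar>mv (R s) u x\<bar>) summable_on UNIV \<and>
               (\<Sum>\<^sub>\<infinity>x. om x * \<bar>mv (R s) u x\<bar>) \<le> \<rho> * (\<Sum>\<^sub>\<infinity>z. om z * \<bar>u z\<bar>)"
    and rho: "\<rho> \<ge> 0"
  shows "(\<Sum>\<^sub>\<infinity>x. om x * \<bar>v b x - c x\<bar>) + (\<Sum>\<^sub>\<infinity>x. om x * \<bar>c x\<bar>)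
         \<le> ((\<Sum>\<^sub>\<infinity>x. om x * \<bar>v a x - c x\<bar>) + (\<Sum>\<^sub>\<infinity>x. om x * \<bar>c x\<bar>)) * exp (\<rho> * (b - a))"
proof -
  have om0: "0 \<le> om x" for x using om1[of x] by linarith
  have W1: "W \<ge> 1" using om1[of undefined] omW[of undefined] by linarith
  define \<kappa> where "\<kappa> = (\<Sum>\<^sub>\<infinity>x. om x * \<bar>c x\<bar>)"
  define f where "f s = (\<Sum>\<^sub>\<infinity>x. om x * \<bar>v s x - c x\<bar>) + \<kappa>" for s
  have dsum: "(\<lambda>x. \<bar>v s x - c x\<bar>) summable_on UNIV" if "s \<in> {a..b}" for s
    using vb_diff[of "v s" _ c] vs[OF that] cs unfolding vb_def by blast
  have oms: "(\<lambda>x. om x * \<bar>v s x - c x\<bar>) summable_on UNIV" if "s \<in> {a..b}" for s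
    by (rule wsum(1)[OF om0 omW dsum[OF that]])
  have omc: "(\<lambda>x. om x * \<bar>c x\<bar>) summable_on UNIV" by (rule wsum(1)[OF om0 omW cs])
  have kap0: "\<kappa> \<ge> 0" unfolding \<kappa>_def by (rule infsum_nonneg) (simp add: om0)
  have omv: "(\<lambda>x. om x * \<bar>v s x\<bar>) summable_on UNIV" if "s \<in> {a..b}" for s
    by (rule wsum(1)[OF om0 omW vs[OF that]])
  have vle: "(\<Sum>\<^sub>\<infinity>x. om x * \<bar>v s x\<bar>) \<le> f s" if "s \<in> {a..b}" for s
  proof -
    have "(\<Sum>\<^sub>\<infinity>x. om x * \<bar>v s x\<bar>) \<le> (\<Sum>\<^sub>\<infinity>x. om x * \<bar>v s x - c x\<bar>) + (\<Sum>\<^sub>\<infinity>x. om x * \<bar>c x\<bar>) + (\<Sum>\<^sub>\<infinity>x::'s. 0)"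
    proof (rule infsum_le3[OF oms[OF that] omc _ omv[OF that]])
      fix x
      have "om x * \<bar>v s x\<bar> \<le> om x * (\<bar>v s x - c x\<bar> + \<bar>c x\<bar>)" by (rule mult_left_mono) (auto simp: om0)
      then show "om x * \<bar>v s x\<bar> \<le> om x * \<bar>v s x - c x\<bar> + om x * \<bar>c x\<bar> + 0" by (simp add: algebra_simps)
    qed simp
    then show ?thesis by (simp add: f_def \<kappa>_def)
  qed
  have "f b \<le> f a * exp (\<rho> * (b - a))"
  proof (rule gronwall[OF ab _ K rho])
    show "continuous_on {a..b} f"
      unfolding continuous_on_iff
    proof (intro ballI allI impI)
      fix s e assume s: "s \<in> {a..b}" and e: "(e::real) > 0"
      obtain d where d: "d > 0" "\<forall>s'\<in>{a..b}. \<bar>s' - s\<bar> < d \<longrightarrow> vb (\<lambda>x. v s' x - v s x) (e/(2*W))"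
        using cont[OF s, of "e/(2*W)"] e W1 by auto
      show "\<exists>d>0. \<forall>s'\<in>{a..b}. dist s' s < d \<longrightarrow> dist (f s') (f s) < e"
      proof (intro exI[of _ d] conjI ballI impI)
        fix s' assume s': "s' \<in> {a..b}" "dist s' s < d"
        then have vd: "vb (\<lambda>x. v s' x - v s x) (e/(2*W))" using d by (auto simp: dist_real_def)
        have ws: "(\<lambda>x. om x * \<bar>v s' x - v s x\<bar>) summable_on UNIV"
          "(\<Sum>\<^sub>\<infinity>x. om x * \<bar>v s' x - v s x\<bar>) \<le> W * (\<Sum>\<^sub>\<infinity>x. \<bar>v s' x - v s x\<bar>)"
          using wsum[OF om0 omW, of "\<lambda>x. v s' x - v s x"] vd by (auto simp: vb_def)
        have bnd: "W * (\<Sum>\<^sub>\<infinity>x. \<bar>v s' x - v s x\<bar>) \<le> W * (e/(2*W))"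
          using vd W1 by (intro mult_left_mono) (auto simp: vb_def)
        have We: "W * (e/(2*W)) = e/2" using W1 by simp
        have "f s' - f s \<le> (\<Sum>\<^sub>\<infinity>x. om x * \<bar>v s' x - v s x\<bar>)"
        proof -
          have "(\<Sum>\<^sub>\<infinity>x. om x * \<bar>v s' x - c x\<bar>) \<le> (\<Sum>\<^sub>\<infinity>x. om x * \<bar>v s x - c x\<bar>) + (\<Sum>\<^sub>\<infinity>x. om x * \<bar>v s' x - v s x\<bar>) + (\<Sum>\<^sub>\<infinity>x::'s. 0)"
          proof (rule infsum_le3[OF oms[OF s] ws(1) _ oms[OF s'(1)]])
            fix x
            have "om x * \<bar>v s' x - c x\<bar> \<le> om x * (\<bar>v s x - c x\<bar> + \<bar>v s' x - v s x\<bar>)" by (rule mult_left_mono) (auto simp: om0)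
            then show "om x * \<bar>v s' x - c x\<bar> \<le> om x * \<bar>v s x - c x\<bar> + om x * \<bar>v s' x - v s x\<bar> + 0" by (simp add: algebra_simps)
          qed simp
          then show ?thesis by (simp add: f_def)
        qed
        moreover have "f s - f s' \<le> (\<Sum>\<^sub>\<infinity>x. om x * \<bar>v s' x - v s x\<bar>)"
        proof -
          have "(\<Sum>\<^sub>\<infinity>x. om x * \<bar>v s x - c x\<bar>) \<le> (\<Sum>\<^sub>\<infinity>x. om x * \<bar>v s' x - c x\<bar>) + (\<Sum>\<^sub>\<infinity>x. om x * \<bar>v s' x - v s x\<bar>) + (\<Sum>\<^sub>\<infinity>x::'s. 0)"
          proof (rule infsum_le3[OF oms[OF s'(1)] ws(1) _ oms[OF s]])
            fix x
            have "om x * \<bar>v s x - c x\<bar> \<le> om x * (\<bar>v s' x - c x\<bar> + \<bar>v s' x - v s x\<bar>)" by (rule mult_left_mono) (auto simp: om0)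
            then show "om x * \<bar>v s x - c x\<bar> \<le> om x * \<bar>v s' x - c x\<bar> + om x * \<bar>v s' x - v s x\<bar> + 0" by (simp add: algebra_simps)
          qed simp
          then show ?thesis by (simp add: f_def)
        qed
        ultimately show "dist (f s') (f s) < e" using ws(2) bnd We e by (auto simp: dist_real_def)
      qed (rule d(1))
    qed
    show "\<And>t. t \<in> {a..b} \<Longrightarrow> 0 \<le> f t" unfolding f_def using kap0
      by (auto intro!: add_nonneg_nonneg infsum_nonneg simp: om0)
    fix s e assume s: "s \<in> {a..<b} - K" and e: "(e::real) > 0"
    have sab: "s \<in> {a..b}" using s by auto
    obtain d where d: "d > 0" "\<forall>h. 0 < h \<and> h < d \<and> s + h \<le> b \<longrightarrow> vb (\<lambda>x. v (s+h) x - v s x - h * mv (R s) (v s) x) (h*(e/W))"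
      using der[OF s, of "e/W"] e W1 by auto
    show "\<exists>d>0. \<forall>h. 0 < h \<and> h < d \<and> s + h \<le> b \<longrightarrow> f (s+h) \<le> f s + h*(\<rho> * f s + e)"
    proof (intro exI[of _ d] conjI allI impI)
      fix h assume h: "0 < h \<and> h < d \<and> s + h \<le> b"
      have sh: "s + h \<in> {a..b}" using h s by auto
      define err where "err x = v (s+h) x - v s x - h * mv (R s) (v s) x" for x
      have E: "vb err (h*(e/W))" using d h unfolding err_def[abs_def] by simp
      have Es: "(\<lambda>x. om x * \<bar>err x\<bar>) summable_on UNIV" "(\<Sum>\<^sub>\<infinity>x. om x * \<bar>err x\<bar>) \<le> W * (h*(e/W))"
      proof -
        show "(\<lambda>x. om x * \<bar>err x\<bar>) summable_on UNIV" using wsum(1)[OF om0 omW, of err] E by (auto simp: vb_def)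
        have "(\<Sum>\<^sub>\<infinity>x. om x * \<bar>err x\<bar>) \<le> W * (\<Sum>\<^sub>\<infinity>x. \<bar>err x\<bar>)" using wsum(2)[OF om0 omW, of err] E by (auto simp: vb_def)
        also have "\<dots> \<le> W * (h*(e/W))" using E W1 by (intro mult_left_mono) (auto simp: vb_def)
        finally show "(\<Sum>\<^sub>\<infinity>x. om x * \<bar>err x\<bar>) \<le> W * (h*(e/W))" .
      qed
      have Rv: "(\<lambda>x. om x * \<bar>mv (R s) (v s) x\<bar>) summable_on UNIV"
        "(\<Sum>\<^sub>\<infinity>x. om x * \<bar>mv (R s) (v s) x\<bar>) \<le> \<rho> * (\<Sum>\<^sub>\<infinity>z. om z * \<bar>v s z\<bar>)"
        using Rw[OF sab omv[OF sab]] by auto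
      have hRv: "(\<lambda>x. h * (om x * \<bar>mv (R s) (v s) x\<bar>)) summable_on UNIV" by (rule summable_on_cmult_right[OF Rv(1)])
      have "(\<Sum>\<^sub>\<infinity>x. om x * \<bar>v (s+h) x - c x\<bar>)
            \<le> (\<Sum>\<^sub>\<infinity>x. om x * \<bar>v s x - c x\<bar>) + (\<Sum>\<^sub>\<infinity>x. h * (om x * \<bar>mv (R s) (v s) x\<bar>)) + (\<Sum>\<^sub>\<infinity>x. om x * \<bar>err x\<bar>)"
      proof (rule infsum_le3[OF oms[OF sab] hRv Es(1) oms[OF sh]])
        fix x
        have eq: "v (s+h) x - c x = (v s x - c x) + h * mv (R s) (v s) x + err x" by (simp add: err_def)
        have "\<bar>v (s+h) x - c x\<bar> \<le> \<bar>v s x - c x\<bar> + h * \<bar>mv (R s) (v s) x\<bar> + \<bar>err x\<bar>"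
        proof -
          have "\<bar>h * mv (R s) (v s) x\<bar> = h * \<bar>mv (R s) (v s) x\<bar>" using h by (simp add: abs_mult)
          then show ?thesis unfolding eq
            using abs_triangle_ineq[of "v s x - c x + h * mv (R s) (v s) x" "err x"]
              abs_triangle_ineq[of "v s x - c x" "h * mv (R s) (v s) x"] by linarith
        qed
        then have "om x * \<bar>v (s+h) x - c x\<bar> \<le> om x * (\<bar>v s x - c x\<bar> + h * \<bar>mv (R s) (v s) x\<bar> + \<bar>err x\<bar>)"
          by (rule mult_left_mono) (simp add: om0)
        then show "om x * \<bar>v (s+h) x - c x\<bar> \<le> om x * \<bar>v s x - c x\<bar> + h * (om x * \<bar>mv (R s) (v s) x\<bar>) + om x * \<bar>err x\<bar>"
          by (simp add: algebra_simps)
      qed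
      also have "(\<Sum>\<^sub>\<infinity>x. h * (om x * \<bar>mv (R s) (v s) x\<bar>)) = h * (\<Sum>\<^sub>\<infinity>x. om x * \<bar>mv (R s) (v s) x\<bar>)"
        by (rule infsum_cmult_right')
      also have "h * (\<Sum>\<^sub>\<infinity>x. om x * \<bar>mv (R s) (v s) x\<bar>) \<le> h * (\<rho> * f s)"
      proof (rule mult_left_mono)
        have "\<rho> * (\<Sum>\<^sub>\<infinity>z. om z * \<bar>v s z\<bar>) \<le> \<rho> * f s" by (rule mult_left_mono[OF vle[OF sab] rho])
        then show "(\<Sum>\<^sub>\<infinity>x. om x * \<bar>mv (R s) (v s) x\<bar>) \<le> \<rho> * f s" using Rv(2) by linarith
      qed (use h in simp)
      finally have "(\<Sum>\<^sub>\<infinity>x. om x * \<bar>v (s+h) x - c x\<bar>) \<le> (\<Sum>\<^sub>\<infinity>x. om x * \<bar>v s x - c x\<bar>) + h * (\<rho> * f s) + W * (h*(e/W))"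
        using Es(2) by linarith
      moreover have "W * (h*(e/W)) = h * e" using W1 by simp
      ultimately show "f (s+h) \<le> f s + h*(\<rho> * f s + e)" by (simp add: f_def algebra_simps)
    qed (rule d(1))
  qed
  then show ?thesis by (simp add: f_def \<kappa>_def)
qed


lemma summable_abs_transfer:
  fixes u w :: "'s \<Rightarrow> real"
  assumes d: "(\<lambda>x. \<bar>u x - w x\<bar>) summable_on UNIV" and w: "(\<lambda>x. \<bar>w x\<bar>) summable_on UNIV"
  shows "(\<lambda>x. \<bar>u x\<bar>) summable_on UNIV"
proof -
  have "(\<lambda>x. \<bar>w x\<bar> + \<bar>u x - w x\<bar>) summable_on UNIV" by (rule summable_on_add[OF w d])
  then show ?thesis by (rule summable_real_cmp) auto
qed

locale tx =
  fixes \<tau> C l :: real and K :: "real set" and R P :: "real \<Rightarrow> ('d::finite) smat"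
  assumes tau: "\<tau> \<ge> 0" and Cpos: "C > 0" and lpos: "l > 0" and Kfin: "finite K"
    and P0: "P 0 = id_mat"
    and Pc: "mat_continuous_on {0..\<tau>} P"
    and Pd: "\<forall>s\<in>{0..\<tau>} - K. \<forall>e>0. \<exists>d>0. \<forall>h. h \<noteq> 0 \<and> \<bar>h\<bar> < d \<and> s + h \<in> {0..\<tau>} \<longrightarrow>
        mat_close (\<lambda>x y. (P (s + h) x y - P s x y) / h) (mat_mult (R s) (P s)) e"
    and Rr: "\<forall>t\<in>{0..\<tau>}. rate_mat (R t)"
    and Rb: "\<forall>t\<in>{0..\<tau>}. \<forall>i a j b. \<bar>R t (i,a) (j,b)\<bar> \<le> C * exp (- real_of_int \<bar>i - j\<bar> / l)"
begin

definition "mu = 1/(2*l)"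
definition "rho = C * real CARD('d) * E1 mu"
definition wL :: "real \<Rightarrow> (int \<times> 'd) \<Rightarrow> (int \<times> 'd) \<Rightarrow> real" where
  "wL L x z = exp (mu * min (real_of_int \<bar>fst x - fst z\<bar>) L)"

lemma mu_pos: "mu > 0" using lpos by (simp add: mu_def)

lemma rho_nonneg: "rho \<ge> 0"
  unfolding rho_def using Cpos E1_pos[OF mu_pos] by simp

lemma Rbx: "t \<in> {0..\<tau>} \<Longrightarrow> \<bar>R t x z\<bar> \<le> C * exp (-(2*mu) * real_of_int \<bar>fst x - fst z\<bar>)"
proof -
  assume t: "t \<in> {0..\<tau>}"
  obtain i a where x: "x = (i,a)" by (cases x)
  obtain j b where z: "z = (j,b)" by (cases z)
  have "\<bar>R t x z\<bar> \<le> C * exp (- real_of_int \<bar>i - j\<bar> / l)" using Rb t x z by auto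
  moreover have "- real_of_int \<bar>i - j\<bar> / l = -(2*mu) * real_of_int \<bar>fst x - fst z\<bar>"
    using lpos by (simp add: x z mu_def)
  ultimately show ?thesis by simp
qed

lemma Rdiag: "t \<in> {0..\<tau>} \<Longrightarrow> \<bar>R t x x\<bar> \<le> C"
  using Rbx[of t x x] by simp

end


context tx begin

lemma Rw_col:
  assumes t: "t \<in> {0..\<tau>}"
  shows "(\<lambda>x. exp (mu * real_of_int \<bar>fst x - fst z\<bar>) * \<bar>R t x z\<bar>) summable_on UNIV"
    "(\<Sum>\<^sub>\<infinity>x. exp (mu * real_of_int \<bar>fst x - fst z\<bar>) * \<bar>R t x z\<bar>) \<le> rho"
proof -
  have le: "exp (mu * real_of_int \<bar>fst x - fst z\<bar>) * \<bar>R t x z\<bar> \<le> C * exp (-mu * real_of_int \<bar>fst x - fst z\<bar>)" for x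
  proof -
    have "exp (mu * real_of_int \<bar>fst x - fst z\<bar>) * \<bar>R t x z\<bar> \<le> exp (mu * real_of_int \<bar>fst x - fst z\<bar>) * (C * exp (-(2*mu) * real_of_int \<bar>fst x - fst z\<bar>))"
      by (rule mult_left_mono[OF Rbx[OF t]]) simp
    also have "\<dots> = C * exp (-mu * real_of_int \<bar>fst x - fst z\<bar>)"
      by (simp add: mult.left_commute exp_add[symmetric] algebra_simps)
    finally show ?thesis .
  qed
  have cs: "(\<lambda>x::int \<times> 'd. C * exp (-mu * real_of_int \<bar>fst x - fst z\<bar>)) summable_on UNIV"
    using exps_prod(1)[OF mu_pos, of "fst z"] by (rule summable_on_cmult_right)
  show s: "(\<lambda>x. exp (mu * real_of_int \<bar>fst x - fst z\<bar>) * \<bar>R t x z\<bar>) summable_on UNIV"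
    by (rule summable_on_comparison_test[OF cs]) (use le in auto)
  have "(\<Sum>\<^sub>\<infinity>x. exp (mu * real_of_int \<bar>fst x - fst z\<bar>) * \<bar>R t x z\<bar>) \<le> (\<Sum>\<^sub>\<infinity>x::int\<times>'d. C * exp (-mu * real_of_int \<bar>fst x - fst z\<bar>))"
    by (rule infsum_mono[OF s cs]) (use le in auto)
  also have "\<dots> = rho" unfolding rho_def
    by (simp only: infsum_cmult_right' exps_prod(2)[OF mu_pos] mult.assoc)
  finally show "(\<Sum>\<^sub>\<infinity>x. exp (mu * real_of_int \<bar>fst x - fst z\<bar>) * \<bar>R t x z\<bar>) \<le> rho" .
qed

lemma wL_ge1: "L \<ge> 0 \<Longrightarrow> wL L x z \<ge> 1"
  unfolding wL_def using mu_pos by simp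

lemma wL_le_exp: "wL L x z \<le> exp (mu * real_of_int \<bar>fst x - fst z\<bar>)"
  unfolding wL_def using mu_pos by simp

lemma wL_le_L: "wL L x z \<le> exp (mu * L)"
  unfolding wL_def using mu_pos by simp

lemma wL_diag: "L \<ge> 0 \<Longrightarrow> wL L x x = 1"
  unfolding wL_def by simp

lemma wL_zero: "wL 0 x z = 1"
  unfolding wL_def by simp

lemma wL_tri: "L \<ge> 0 \<Longrightarrow> wL L x y \<le> wL L x z * wL L z y"
proof -
  assume L: "L \<ge> 0"
  define a where "a = real_of_int \<bar>fst x - fst y\<bar>"
  define b where "b = real_of_int \<bar>fst x - fst z\<bar>"
  define c where "c = real_of_int \<bar>fst z - fst y\<bar>"
  have abc: "a \<le> b + c" "b \<ge> 0" "c \<ge> 0" by (auto simp: a_def b_def c_def)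
  have "min a L \<le> min b L + min c L" using abc L by linarith
  then have "mu * min a L \<le> mu * min b L + mu * min c L"
    using mu_pos by (simp add: distrib_left[symmetric])
  then show ?thesis unfolding wL_def a_def[symmetric] b_def[symmetric] c_def[symmetric]
    by (simp add: exp_add[symmetric])
qed

lemma Rw_L:
  assumes t: "t \<in> {0..\<tau>}"
  shows "(\<lambda>x. wL L x z * \<bar>R t x z\<bar>) summable_on UNIV" "(\<Sum>\<^sub>\<infinity>x. wL L x z * \<bar>R t x z\<bar>) \<le> rho"
proof -
  have le: "wL L x z * \<bar>R t x z\<bar> \<le> exp (mu * real_of_int \<bar>fst x - fst z\<bar>) * \<bar>R t x z\<bar>" for x
    by (rule mult_right_mono[OF wL_le_exp]) simp
  have nn: "0 \<le> wL L x z * \<bar>R t x z\<bar>" for x by (simp add: wL_def)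
  show s: "(\<lambda>x. wL L x z * \<bar>R t x z\<bar>) summable_on UNIV"
    by (rule summable_on_comparison_test[OF Rw_col(1)[OF t]]) (use le nn in auto)
  have "(\<Sum>\<^sub>\<infinity>x. wL L x z * \<bar>R t x z\<bar>) \<le> (\<Sum>\<^sub>\<infinity>x. exp (mu * real_of_int \<bar>fst x - fst z\<bar>) * \<bar>R t x z\<bar>)"
    by (rule infsum_mono[OF s Rw_col(1)[OF t]]) (use le in auto)
  then show "(\<Sum>\<^sub>\<infinity>x. wL L x z * \<bar>R t x z\<bar>) \<le> rho" using Rw_col(2)[OF t, of z] by linarith
qed

lemma cbR: "t \<in> {0..\<tau>} \<Longrightarrow> cb (R t) rho"
  using Rw_L[of t 0] unfolding cb_def vb_def wL_zero by simp

lemma Rw_act: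
  assumes t: "t \<in> {0..\<tau>}" and L: "L \<ge> 0" and us: "(\<lambda>z. wL L z y * \<bar>u z\<bar>) summable_on UNIV"
  shows "(\<lambda>x. wL L x y * \<bar>mv (R t) u x\<bar>) summable_on UNIV \<and>
         (\<Sum>\<^sub>\<infinity>x. wL L x y * \<bar>mv (R t) u x\<bar>) \<le> rho * (\<Sum>\<^sub>\<infinity>z. wL L z y * \<bar>u z\<bar>)"
  using wmv(2,3)[of "wL L" "R t" rho "\<lambda>z. wL L z y" u "\<Sum>\<^sub>\<infinity>z. wL L z y * \<bar>u z\<bar>" "\<lambda>x. wL L x y",
      OF Rw_L(1)[OF t] Rw_L(2)[OF t] us order_refl wL_ge1[OF L] wL_ge1[OF L] wL_tri[OF L]]
    L by (auto simp: wL_def)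

lemma Pcol_cont:
  assumes s: "s \<in> {0..\<tau>}" and e: "e > 0"
  shows "\<exists>d>0. \<forall>s'\<in>{0..\<tau>}. \<bar>s' - s\<bar> < d \<longrightarrow> vb (\<lambda>x. P s' x y - P s x y) e"
proof -
  obtain d where d: "d > 0" "\<forall>s'\<in>{0..\<tau>}. \<bar>s' - s\<bar> < d \<longrightarrow> mat_close (P s') (P s) e"
    using Pc s e unfolding mat_continuous_on_def by blast
  show ?thesis
  proof (intro exI[of _ d] conjI ballI impI)
    fix s' assume "s' \<in> {0..\<tau>}" "\<bar>s' - s\<bar> < d"
    then have "cb (\<lambda>x y. P s' x y - P s x y) e" using d unfolding mat_close_cb by blast
    then show "vb (\<lambda>x. P s' x y - P s x y) e" by (rule cbD)
  qed (rule d(1))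
qed

lemma Pcol_sum: "s \<in> {0..\<tau>} \<Longrightarrow> (\<lambda>x. \<bar>P s x y\<bar>) summable_on UNIV"
proof -
  assume s: "s \<in> {0..\<tau>}"
  define S where "S t \<longleftrightarrow> (\<lambda>x. \<bar>P t x y\<bar>) summable_on UNIV" for t
  define g where "g t = (if S t then 0 else 1::real)" for t
  have loc: "\<exists>d>0. \<forall>t'\<in>{0..\<tau>}. \<bar>t' - t\<bar> < d \<longrightarrow> g t' = g t" if t: "t \<in> {0..\<tau>}" for t
  proof -
    obtain d where d: "d > 0" "\<forall>t'\<in>{0..\<tau>}. \<bar>t' - t\<bar> < d \<longrightarrow> vb (\<lambda>x. P t' x y - P t x y) 1"
      using Pcol_cont[OF t zero_less_one, of y] by blast
    show ?thesis
    proof (intro exI[of _ d] conjI ballI impI)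
      fix t' assume t': "t' \<in> {0..\<tau>}" "\<bar>t' - t\<bar> < d"
      have v: "(\<lambda>x. \<bar>P t' x y - P t x y\<bar>) summable_on UNIV" using d t' unfolding vb_def by blast
      have v': "(\<lambda>x. \<bar>P t x y - P t' x y\<bar>) summable_on UNIV" using v by (simp add: abs_minus_commute)
      have "S t' \<longleftrightarrow> S t" unfolding S_def
        using summable_abs_transfer[OF v] summable_abs_transfer[OF v'] by blast
      then show "g t' = g t" unfolding g_def by simp
    qed (rule d(1))
  qed
  have "g s \<le> g 0"
  proof (rule dini_fin[of "{}" 0 s g])
    show "0 \<le> s" using s by simp
    show "continuous_on {0..s} g" unfolding continuous_on_iff
    proof (intro ballI allI impI)
      fix t e assume t: "t \<in> {0..s}" and e: "(e::real) > 0"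
      then have t': "t \<in> {0..\<tau>}" using s by auto
      obtain d where d: "d > 0" "\<forall>t'\<in>{0..\<tau>}. \<bar>t' - t\<bar> < d \<longrightarrow> g t' = g t" using loc[OF t'] by blast
      show "\<exists>d>0. \<forall>t'\<in>{0..s}. dist t' t < d \<longrightarrow> dist (g t') (g t) < e"
      proof (intro exI[of _ d] conjI ballI impI)
        fix t'' assume "t'' \<in> {0..s}" "dist t'' t < d"
        then have "g t'' = g t" using d s by (auto simp: dist_real_def)
        then show "dist (g t'') (g t) < e" using e by simp
      qed (rule d(1))
    qed
    fix t e assume t: "t \<in> {0..<s} - {}" and e: "(e::real) > 0"
    then have t': "t \<in> {0..\<tau>}" using s by auto
    obtain d where d: "d > 0" "\<forall>t'\<in>{0..\<tau>}. \<bar>t' - t\<bar> < d \<longrightarrow> g t' = g t" using loc[OF t'] by blast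
    show "\<exists>d>0. \<forall>h. 0 < h \<and> h < d \<and> t + h \<le> s \<longrightarrow> g (t+h) \<le> g t + h*e"
    proof (intro exI[of _ d] conjI allI impI)
      fix h assume h: "0 < h \<and> h < d \<and> t + h \<le> s"
      then have "t + h \<in> {0..\<tau>}" "\<bar>(t + h) - t\<bar> < d" using t s by auto
      then have "g (t+h) = g t" using d by blast
      then show "g (t+h) \<le> g t + h*e" using h e by simp
    qed (rule d(1))
  qed simp
  moreover have "S 0"
    using cbD[OF cb_id, of y] unfolding S_def vb_def P0 by blast
  ultimately have "g s \<le> 0" by (simp add: g_def)
  then have "S s" unfolding g_def by (cases "S s") auto
  then show ?thesis unfolding S_def .
qed

lemma Pcol_der:
  assumes s: "s \<in> {0..\<tau>} - K" and e: "e > 0"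
  shows "\<exists>d>0. \<forall>h. 0 < h \<and> h < d \<and> s + h \<le> \<tau> \<longrightarrow>
           vb (\<lambda>x. P (s+h) x y - P s x y - h * mv (R s) (\<lambda>z. P s z y) x) (h*e)"
proof -
  obtain d where d: "d > 0" "\<forall>h. h \<noteq> 0 \<and> \<bar>h\<bar> < d \<and> s + h \<in> {0..\<tau>} \<longrightarrow>
        mat_close (\<lambda>x y. (P (s + h) x y - P s x y) / h) (mat_mult (R s) (P s)) e"
    using Pd s e by blast
  show ?thesis
  proof (intro exI[of _ d] conjI allI impI)
    fix h assume h: "0 < h \<and> h < d \<and> s + h \<le> \<tau>"
    then have "mat_close (\<lambda>x y. (P (s + h) x y - P s x y) / h) (mat_mult (R s) (P s)) e"
      using d s by auto
    then have "vb (\<lambda>x. (P (s + h) x y - P s x y) / h - mat_mult (R s) (P s) x y) e"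
      unfolding mat_close_cb by (rule cbD)
    then have "vb (\<lambda>x. h * ((P (s + h) x y - P s x y) / h - mat_mult (R s) (P s) x y)) (\<bar>h\<bar> * e)"
      by (rule vb_scale)
    moreover have "h * ((P (s + h) x y - P s x y) / h - mat_mult (R s) (P s) x y)
        = P (s+h) x y - P s x y - h * mv (R s) (\<lambda>z. P s z y) x" for x
      using h by (simp add: mat_mult_mv field_simps)
    ultimately show "vb (\<lambda>x. P (s+h) x y - P s x y - h * mv (R s) (\<lambda>z. P s z y) x) (h*e)"
      using h by simp
  qed (rule d(1))
qed

end


lemma dini_eq:
  fixes f :: "real \<Rightarrow> real"
  assumes ab: "a \<le> b" and cont: "continuous_on {a..b} f" and K: "finite K"
    and D: "\<And>s e. s \<in> {a..<b} - K \<Longrightarrow> e > 0 \<Longrightarrow> \<exists>d>0. \<forall>h. 0 < h \<and> h < d \<and> s + h \<le> b \<longrightarrow> \<bar>f (s+h) - f s\<bar> \<le> h*e"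
  shows "f b = f a"
proof -
  have "f b \<le> f a"
  proof (rule dini_fin[OF K ab cont])
    fix s e assume "s \<in> {a..<b} - K" "(e::real) > 0"
    from D[OF this] obtain d where d: "d > 0" "\<forall>h. 0 < h \<and> h < d \<and> s + h \<le> b \<longrightarrow> \<bar>f (s+h) - f s\<bar> \<le> h*e" by blast
    show "\<exists>d>0. \<forall>h. 0 < h \<and> h < d \<and> s + h \<le> b \<longrightarrow> f (s+h) \<le> f s + h*e"
      using d by (intro exI[of _ d]) (auto simp: abs_le_iff)
  qed
  moreover have "- f b \<le> - f a"
  proof (rule dini_fin[OF K ab])
    show "continuous_on {a..b} (\<lambda>x. - f x)" by (intro continuous_intros cont)
    fix s e assume "s \<in> {a..<b} - K" "(e::real) > 0"
    from D[OF this] obtain d where d: "d > 0" "\<forall>h. 0 < h \<and> h < d \<and> s + h \<le> b \<longrightarrow> \<bar>f (s+h) - f s\<bar> \<le> h*e" by blast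
    show "\<exists>d>0. \<forall>h. 0 < h \<and> h < d \<and> s + h \<le> b \<longrightarrow> - f (s+h) \<le> - f s + h*e"
      using d by (intro exI[of _ d]) (auto simp: abs_le_iff)
  qed
  ultimately show ?thesis by simp
qed

lemma mv_diag_ge:
  assumes A: "cb A a" and u: "vb u b" and u0: "\<And>z. u z \<ge> 0" and off: "\<And>z. z \<noteq> x \<Longrightarrow> A x z \<ge> 0"
  shows "mv A u x \<ge> A x x * u x"
proof -
  have "(\<Sum>\<^sub>\<infinity>z. if z = x then A x x * u x else 0) \<le> (\<Sum>\<^sub>\<infinity>z. A x z * u z)"
  proof (rule infsum_mono)
    show "(\<lambda>z. if z = x then A x x * u x else 0) summable_on UNIV"
      using delta_has_sum[of x "A x x * u x"] by (simp add: has_sum_iff)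
    show "(\<lambda>z. A x z * u z) summable_on UNIV" by (rule mv_bound(1)[OF A u])
    fix z show "(if z = x then A x x * u x else 0) \<le> A x z * u z"
      using off[of z] u0[of z] by auto
  qed
  also have "(\<Sum>\<^sub>\<infinity>z. if z = x then A x x * u x else 0) = A x x * u x"
    by (rule infsumI[OF delta_has_sum])
  finally show ?thesis unfolding mv_def .
qed

context tx begin

lemma Pw_bound:
  assumes t: "t \<in> {0..\<tau>}" and L: "L \<ge> 0"
  shows "(\<lambda>x. wL L x y * \<bar>P t x y\<bar>) summable_on UNIV" "(\<Sum>\<^sub>\<infinity>x. wL L x y * \<bar>P t x y\<bar>) \<le> exp (rho * t)"
proof -
  have sub: "s \<in> {0..t} \<Longrightarrow> s \<in> {0..\<tau>}" for s using t by auto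
  have W: "(\<Sum>\<^sub>\<infinity>x. wL L x y * \<bar>P t x y - 0\<bar>) + (\<Sum>\<^sub>\<infinity>x. wL L x y * \<bar>0::real\<bar>)
         \<le> ((\<Sum>\<^sub>\<infinity>x. wL L x y * \<bar>P 0 x y - 0\<bar>) + (\<Sum>\<^sub>\<infinity>x. wL L x y * \<bar>0::real\<bar>)) * exp (rho * (t - 0))"
  proof (rule wgron[where K=K and W="exp (mu * L)" and R=R])
    show "0 \<le> t" using t by simp
    show "finite K" by (rule Kfin)
    show "1 \<le> wL L x y" for x by (rule wL_ge1[OF L])
    show "wL L x y \<le> exp (mu * L)" for x by (rule wL_le_L)
    show "(\<lambda>x. \<bar>P s x y\<bar>) summable_on UNIV" if "s \<in> {0..t}" for s by (rule Pcol_sum[OF sub[OF that]])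
    show "(\<lambda>x. \<bar>0::real\<bar>) summable_on UNIV" by simp
    show "\<exists>d>0. \<forall>s'\<in>{0..t}. \<bar>s' - s\<bar> < d \<longrightarrow> vb (\<lambda>x. P s' x y - P s x y) e"
      if ss: "s \<in> {0..t}" and ee: "e > 0" for s e
    proof -
      obtain d where "d > 0" "\<forall>s'\<in>{0..\<tau>}. \<bar>s' - s\<bar> < d \<longrightarrow> vb (\<lambda>x. P s' x y - P s x y) e"
        using Pcol_cont[OF sub[OF ss] ee, of y] by blast
      then show ?thesis using sub by blast
    qed
    show "\<exists>d>0. \<forall>h. 0 < h \<and> h < d \<and> s + h \<le> t \<longrightarrow> vb (\<lambda>x. P (s+h) x y - P s x y - h * mv (R s) (\<lambda>x. P s x y) x) (h*e)"
      if ss: "s \<in> {0..<t} - K" and ee: "e > 0" for s e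
    proof -
      have "s \<in> {0..\<tau>} - K" using ss t by auto
      from Pcol_der[OF this ee, of y] obtain d where d: "d > 0"
        "\<forall>h. 0 < h \<and> h < d \<and> s + h \<le> \<tau> \<longrightarrow> vb (\<lambda>x. P (s+h) x y - P s x y - h * mv (R s) (\<lambda>z. P s z y) x) (h*e)"
        by blast
      then show ?thesis using t by (intro exI[of _ d]) auto
    qed
    show "(\<lambda>x. wL L x y * \<bar>mv (R s) u x\<bar>) summable_on UNIV \<and>
          (\<Sum>\<^sub>\<infinity>x. wL L x y * \<bar>mv (R s) u x\<bar>) \<le> rho * (\<Sum>\<^sub>\<infinity>z. wL L z y * \<bar>u z\<bar>)"
      if "s \<in> {0..t}" "(\<lambda>z. wL L z y * \<bar>u z\<bar>) summable_on UNIV" for s u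
      by (rule Rw_act[OF sub[OF that(1)] L that(2)])
    show "rho \<ge> 0" by (rule rho_nonneg)
  qed
  have I: "(\<Sum>\<^sub>\<infinity>x. wL L x y * \<bar>P 0 x y - 0\<bar>) = 1"
  proof -
    have "(\<lambda>x. wL L x y * \<bar>P 0 x y - 0\<bar>) = (\<lambda>x. if x = y then 1 else 0)"
      by (auto simp: P0 id_mat_def wL_diag[OF L])
    then show ?thesis using infsumI[OF delta_has_sum[of y 1]] by simp
  qed
  from W I show "(\<Sum>\<^sub>\<infinity>x. wL L x y * \<bar>P t x y\<bar>) \<le> exp (rho * t)" by simp
  show "(\<lambda>x. wL L x y * \<bar>P t x y\<bar>) summable_on UNIV"
    by (rule wsum(1)[OF _ wL_le_L Pcol_sum[OF t]]) (simp add: wL_def)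
qed

lemma cbP: "t \<in> {0..\<tau>} \<Longrightarrow> cb (P t) (exp (rho * \<tau>))"
proof (rule cbI)
  fix y assume t: "t \<in> {0..\<tau>}"
  have "(\<Sum>\<^sub>\<infinity>x. \<bar>P t x y\<bar>) \<le> exp (rho * t)" using Pw_bound(2)[OF t order_refl, of y] by (simp add: wL_zero)
  also have "\<dots> \<le> exp (rho * \<tau>)" using t rho_nonneg by (auto intro: mult_left_mono)
  finally show "vb (\<lambda>x. P t x y) (exp (rho * \<tau>))" using Pcol_sum[OF t] unfolding vb_def by simp
qed

lemma Pent: "t \<in> {0..\<tau>} \<Longrightarrow> \<bar>P t x y\<bar> \<le> exp (rho * \<tau>) * exp (-mu * real_of_int \<bar>fst x - fst y\<bar>)"
proof -
  assume t: "t \<in> {0..\<tau>}"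
  define L where "L = real_of_int \<bar>fst x - fst y\<bar>"
  have L: "L \<ge> 0" by (simp add: L_def)
  have "wL L x y * \<bar>P t x y\<bar> \<le> (\<Sum>\<^sub>\<infinity>x. wL L x y * \<bar>P t x y\<bar>)"
    by (rule elem_le_infsum[OF Pw_bound(1)[OF t L]]) (simp add: wL_def)
  also have "\<dots> \<le> exp (rho * t)" by (rule Pw_bound(2)[OF t L])
  also have "\<dots> \<le> exp (rho * \<tau>)" using t rho_nonneg by (auto intro: mult_left_mono)
  finally have a: "exp (mu * L) * \<bar>P t x y\<bar> \<le> exp (rho * \<tau>)" by (simp add: wL_def L_def)
  have "\<bar>P t x y\<bar> = exp (-mu * L) * (exp (mu * L) * \<bar>P t x y\<bar>)"
    by (simp add: mult.assoc[symmetric] exp_add[symmetric])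
  also have "\<dots> \<le> exp (-mu * L) * exp (rho * \<tau>)" by (rule mult_left_mono[OF a]) simp
  finally show ?thesis by (simp add: L_def mult.commute)
qed

end


context tx begin

lemma Rcol0: "s \<in> {0..\<tau>} \<Longrightarrow> (\<Sum>\<^sub>\<infinity>x. R s x z) = 0"
proof -
  assume "s \<in> {0..\<tau>}"
  then have "rate_mat (R s)" using Rr by blast
  then have "((\<lambda>x. R s x z) has_sum 0) UNIV" unfolding rate_mat_def by blast
  then show ?thesis by (rule infsumI)
qed

lemma Roff: "s \<in> {0..\<tau>} \<Longrightarrow> z \<noteq> x \<Longrightarrow> R s x z \<ge> 0"
proof -
  assume s: "s \<in> {0..\<tau>}" and zx: "z \<noteq> x"
  have "rate_mat (R s)" using Rr s by blast
  then have a: "\<forall>x y. x \<noteq> y \<longrightarrow> R s x y \<ge> 0" unfolding rate_mat_def by (rule conjunct1)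
  have "x \<noteq> z \<longrightarrow> R s x z \<ge> 0" using spec[OF spec[OF a, of x], of z] .
  then show ?thesis using zx by simp
qed

lemma Rsum0:
  assumes s: "s \<in> {0..\<tau>}" and u: "vb u b"
  shows "(\<Sum>\<^sub>\<infinity>x. mv (R s) u x) = 0"
proof -
  have "(\<Sum>\<^sub>\<infinity>x. mv (R s) u x) = (\<Sum>\<^sub>\<infinity>z. (\<Sum>\<^sub>\<infinity>x. R s x z) * u z)" by (rule colsum[OF cbR[OF s] u])
  also have "\<dots> = 0" using Rcol0[OF s] by simp
  finally show ?thesis .
qed

lemma vbP: "t \<in> {0..\<tau>} \<Longrightarrow> vb (\<lambda>x. P t x y) (exp (rho * \<tau>))"
  by (rule cbD[OF cbP])

lemma colsum1: "t \<in> {0..\<tau>} \<Longrightarrow> (\<Sum>\<^sub>\<infinity>x. P t x y) = 1"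
proof -
  assume t: "t \<in> {0..\<tau>}"
  have sub: "s \<in> {0..t} \<Longrightarrow> s \<in> {0..\<tau>}" for s using t by auto
  define \<sigma> where "\<sigma> s = (\<Sum>\<^sub>\<infinity>x. P s x y)" for s
  have "\<sigma> t = \<sigma> 0"
  proof (rule dini_eq[where a=0 and b=t and f=\<sigma>, OF _ _ Kfin])
    show "0 \<le> t" using t by simp
    show "continuous_on {0..t} \<sigma>" unfolding continuous_on_iff
    proof (intro ballI allI impI)
      fix s e assume s: "s \<in> {0..t}" and e: "(e::real) > 0"
      obtain d where d: "d > 0" "\<forall>s'\<in>{0..\<tau>}. \<bar>s' - s\<bar> < d \<longrightarrow> vb (\<lambda>x. P s' x y - P s x y) (e/2)"
        using Pcol_cont[OF sub[OF s], of "e/2" y] e by auto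
      show "\<exists>d>0. \<forall>s'\<in>{0..t}. dist s' s < d \<longrightarrow> dist (\<sigma> s') (\<sigma> s) < e"
      proof (intro exI[of _ d] conjI ballI impI)
        fix s' assume s': "s' \<in> {0..t}" "dist s' s < d"
        then have v: "vb (\<lambda>x. P s' x y - P s x y) (e/2)" using d sub by (auto simp: dist_real_def)
        have "\<sigma> s' - \<sigma> s = (\<Sum>\<^sub>\<infinity>x. P s' x y - P s x y)" unfolding \<sigma>_def
          by (rule infsum_diff'[symmetric, OF vb_summable[OF vbP[OF sub[OF s'(1)]]] vb_summable[OF vbP[OF sub[OF s]]]])
        also have "\<bar>\<dots>\<bar> \<le> (\<Sum>\<^sub>\<infinity>x. \<bar>P s' x y - P s x y\<bar>)" by (rule infsum_abs_le) (use v in \<open>simp add: vb_def\<close>)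
        finally show "dist (\<sigma> s') (\<sigma> s) < e" using v e by (auto simp: dist_real_def vb_def)
      qed (rule d(1))
    qed
    fix s e assume s: "s \<in> {0..<t} - K" and e: "(e::real) > 0"
    have s': "s \<in> {0..\<tau>} - K" using s t by auto
    obtain d where d: "d > 0" "\<forall>h. 0 < h \<and> h < d \<and> s + h \<le> \<tau> \<longrightarrow>
           vb (\<lambda>x. P (s+h) x y - P s x y - h * mv (R s) (\<lambda>z. P s z y) x) (h*e)"
      using Pcol_der[OF s' e, of y] by blast
    show "\<exists>d>0. \<forall>h. 0 < h \<and> h < d \<and> s + h \<le> t \<longrightarrow> \<bar>\<sigma> (s+h) - \<sigma> s\<bar> \<le> h*e"
    proof (intro exI[of _ d] conjI allI impI)
      fix h assume h: "0 < h \<and> h < d \<and> s + h \<le> t"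
      have sh: "s + h \<in> {0..\<tau>}" "s \<in> {0..\<tau>}" using h s t by auto
      define err where "err x = P (s+h) x y - P s x y - h * mv (R s) (\<lambda>z. P s z y) x" for x
      have E: "vb err (h*e)" using d h t unfolding err_def[abs_def] by simp
      have mR: "vb (mv (R s) (\<lambda>z. P s z y)) (rho * exp (rho * \<tau>))" by (rule mv_bound(2)[OF cbR[OF sh(2)] vbP[OF sh(2)]])
      have "\<sigma> (s+h) - \<sigma> s = (\<Sum>\<^sub>\<infinity>x. P (s+h) x y - P s x y)" unfolding \<sigma>_def
        by (rule infsum_diff'[symmetric, OF vb_summable[OF vbP[OF sh(1)]] vb_summable[OF vbP[OF sh(2)]]])
      also have "\<dots> = (\<Sum>\<^sub>\<infinity>x. h * mv (R s) (\<lambda>z. P s z y) x + err x)" by (rule infsum_cong) (simp add: err_def)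
      also have "\<dots> = (\<Sum>\<^sub>\<infinity>x. h * mv (R s) (\<lambda>z. P s z y) x) + (\<Sum>\<^sub>\<infinity>x. err x)"
        by (rule infsum_add[OF summable_on_cmult_right[OF vb_summable[OF mR]] vb_summable[OF E]])
      also have "(\<Sum>\<^sub>\<infinity>x. h * mv (R s) (\<lambda>z. P s z y) x) = 0"
        using Rsum0[OF sh(2) vbP[OF sh(2)]] by (simp add: infsum_cmult_right')
      finally have eq: "\<sigma> (s+h) - \<sigma> s = (\<Sum>\<^sub>\<infinity>x. err x)" by simp
      have "\<bar>\<Sum>\<^sub>\<infinity>x. err x\<bar> \<le> (\<Sum>\<^sub>\<infinity>x. \<bar>err x\<bar>)" by (rule infsum_abs_le) (use E in \<open>simp add: vb_def\<close>)
      then show "\<bar>\<sigma> (s+h) - \<sigma> s\<bar> \<le> h*e" using E eq by (simp add: vb_def)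
    qed (rule d(1))
  qed
  moreover have "\<sigma> 0 = 1"
  proof -
    have "(\<lambda>x. P 0 x y) = (\<lambda>x. if x = y then 1 else 0)" by (auto simp: P0 id_mat_def)
    then show ?thesis unfolding \<sigma>_def using infsumI[OF delta_has_sum[of y 1]] by simp
  qed
  ultimately show ?thesis by (simp add: \<sigma>_def)
qed

definition ng :: "real \<Rightarrow> real" where "ng a = max 0 (- a)"

lemma ng_le: "ng a \<le> ng b + \<bar>a - b\<bar>" unfolding ng_def by auto
lemma ng_abs: "\<bar>ng a\<bar> \<le> \<bar>a\<bar>" unfolding ng_def by auto
lemma ng_nn: "ng a \<ge> 0" unfolding ng_def by auto

lemma Pnonneg: "t \<in> {0..\<tau>} \<Longrightarrow> P t x y \<ge> 0"
proof -
  assume t: "t \<in> {0..\<tau>}"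
  have sub: "s \<in> {0..t} \<Longrightarrow> s \<in> {0..\<tau>}" for s using t by auto
  define N where "N s = (\<Sum>\<^sub>\<infinity>x. ng (P s x y))" for s
  have ngs: "(\<lambda>x. ng (P s x y)) summable_on UNIV" if "s \<in> {0..\<tau>}" for s
    by (rule summable_real_cmp[OF vbP[OF that, unfolded vb_def, THEN conjunct1]]) (rule ng_abs)
  have "N t \<le> N 0"
  proof (rule dini_fin[where a=0 and b=t and f=N, OF Kfin])
    show "0 \<le> t" using t by simp
    show "continuous_on {0..t} N" unfolding continuous_on_iff
    proof (intro ballI allI impI)
      fix s e assume s: "s \<in> {0..t}" and e: "(e::real) > 0"
      obtain d where d: "d > 0" "\<forall>s'\<in>{0..\<tau>}. \<bar>s' - s\<bar> < d \<longrightarrow> vb (\<lambda>x. P s' x y - P s x y) (e/2)"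
        using Pcol_cont[OF sub[OF s], of "e/2" y] e by auto
      show "\<exists>d>0. \<forall>s'\<in>{0..t}. dist s' s < d \<longrightarrow> dist (N s') (N s) < e"
      proof (intro exI[of _ d] conjI ballI impI)
        fix s' assume s': "s' \<in> {0..t}" "dist s' s < d"
        then have v: "vb (\<lambda>x. P s' x y - P s x y) (e/2)" using d sub by (auto simp: dist_real_def)
        have vs: "(\<lambda>x. \<bar>P s' x y - P s x y\<bar>) summable_on UNIV" using v by (simp add: vb_def)
        have vs': "(\<lambda>x. \<bar>P s x y - P s' x y\<bar>) summable_on UNIV" using vs by (simp add: abs_minus_commute)
        have "N s' \<le> N s + (\<Sum>\<^sub>\<infinity>x. \<bar>P s' x y - P s x y\<bar>) + (\<Sum>\<^sub>\<infinity>x::int\<times>'d. 0)" unfolding N_def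
          by (rule infsum_le3[OF ngs[OF sub[OF s]] vs _ ngs[OF sub[OF s'(1)]]]) (auto intro: ng_le)
        moreover have "N s \<le> N s' + (\<Sum>\<^sub>\<infinity>x. \<bar>P s x y - P s' x y\<bar>) + (\<Sum>\<^sub>\<infinity>x::int\<times>'d. 0)" unfolding N_def
          by (rule infsum_le3[OF ngs[OF sub[OF s'(1)]] vs' _ ngs[OF sub[OF s]]]) (auto intro: ng_le)
        moreover have "(\<Sum>\<^sub>\<infinity>x. \<bar>P s x y - P s' x y\<bar>) = (\<Sum>\<^sub>\<infinity>x. \<bar>P s' x y - P s x y\<bar>)"
          by (simp add: abs_minus_commute)
        ultimately show "dist (N s') (N s) < e" using v e by (auto simp: dist_real_def vb_def)
      qed (rule d(1))
    qed
    fix s e assume s: "s \<in> {0..<t} - K" and e: "(e::real) > 0"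
    have s': "s \<in> {0..\<tau>} - K" using s t by auto
    have s0: "s \<in> {0..\<tau>}" using s' by auto
    obtain d1 where d1: "d1 > 0" "\<forall>h. 0 < h \<and> h < d1 \<and> s + h \<le> \<tau> \<longrightarrow>
           vb (\<lambda>x. P (s+h) x y - P s x y - h * mv (R s) (\<lambda>z. P s z y) x) (h*e)"
      using Pcol_der[OF s' e, of y] by blast
    define d where "d = min d1 (1/C)"
    have d: "d > 0" using d1 Cpos by (simp add: d_def)
    show "\<exists>d>0. \<forall>h. 0 < h \<and> h < d \<and> s + h \<le> t \<longrightarrow> N (s+h) \<le> N s + h*e"
    proof (intro exI[of _ d] conjI allI impI)
      fix h assume h: "0 < h \<and> h < d \<and> s + h \<le> t"
      have sh: "s + h \<in> {0..\<tau>}" using h s t by auto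
      define v where "v x = P s x y" for x
      define n where "n x = ng (v x)" for x
      define p where "p x = max 0 (v x)" for x
      define err where "err x = P (s+h) x y - P s x y - h * mv (R s) v x" for x
      have E: "vb err (h*e)" using d1 h t unfolding err_def[abs_def] v_def d_def by simp
      have vv: "vb v (exp (rho * \<tau>))" unfolding v_def by (rule vbP[OF s0])
      have vp: "vb p (exp (rho * \<tau>))" by (rule vb_cmp[OF vv]) (auto simp: p_def)
      have vn: "vb n (exp (rho * \<tau>))" by (rule vb_cmp[OF vv]) (auto simp: n_def ng_def)
      have pn: "(\<lambda>z. p z - n z) = v" by (auto simp: p_def n_def ng_def)
      have hC: "h * C \<le> 1" using h Cpos by (simp add: d_def field_simps)
      have pt: "P (s+h) x y \<le> max 0 (P (s+h) x y)" for x by simp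
      have key: "ng (P (s+h) x y) \<le> n x + h * mv (R s) n x + \<bar>err x\<bar>" for x
      proof -
        have Rxx: "\<bar>R s x x\<bar> \<le> C" by (rule Rdiag[OF s0])
        have hR: "1 + h * R s x x \<ge> 0"
        proof -
          have "h * \<bar>R s x x\<bar> \<le> h * C" using Rxx h by (intro mult_left_mono) auto
          then have "h * \<bar>R s x x\<bar> \<le> 1" using hC by linarith
          then have "\<bar>h * R s x x\<bar> \<le> 1" using h by (simp add: abs_mult)
          then show ?thesis by linarith
        qed
        have Rp: "mv (R s) p x \<ge> R s x x * p x"
          by (rule mv_diag_ge[OF cbR[OF s0] vp]) (auto simp: p_def intro: Roff[OF s0])
        have Rn: "mv (R s) n x \<ge> R s x x * n x"
          by (rule mv_diag_ge[OF cbR[OF s0] vn]) (auto simp: n_def ng_def intro: Roff[OF s0])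
        have Rv: "mv (R s) v x = mv (R s) p x - mv (R s) n x"
          using mv_diff[OF cbR[OF s0] vp vn, of x] pn by simp
        have p0: "p x \<ge> 0" "n x \<ge> 0" by (auto simp: p_def n_def ng_def)
        have vx: "v x = p x - n x" using pn by (metis)
        have B0: "n x + h * mv (R s) n x \<ge> 0"
        proof -
          have "h * (R s x x * n x) \<le> h * mv (R s) n x" using Rn h by (intro mult_left_mono) auto
          moreover have "n x * (1 + h * R s x x) \<ge> 0" using p0 hR by simp
          ultimately show ?thesis by (simp add: algebra_simps)
        qed
        have A: "v x + h * mv (R s) v x \<ge> - (n x + h * mv (R s) n x)"
        proof -
          have "h * (R s x x * p x) \<le> h * mv (R s) p x" using Rp h by (intro mult_left_mono) auto
          moreover have "p x * (1 + h * R s x x) \<ge> 0" using p0 hR by simp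
          ultimately show ?thesis unfolding Rv vx by (simp add: algebra_simps)
        qed
        have eq: "P (s+h) x y = (v x + h * mv (R s) v x) + err x" by (simp add: err_def v_def)
        show ?thesis unfolding eq using A B0 by (simp add: ng_def)
      qed
      have mRn: "vb (mv (R s) n) (rho * exp (rho * \<tau>))" by (rule mv_bound(2)[OF cbR[OF s0] vn])
      have "N (s+h) \<le> (\<Sum>\<^sub>\<infinity>x. n x) + (\<Sum>\<^sub>\<infinity>x. h * mv (R s) n x) + (\<Sum>\<^sub>\<infinity>x. \<bar>err x\<bar>)" unfolding N_def
      proof (rule infsum_le3[OF vb_summable[OF vn] summable_on_cmult_right[OF vb_summable[OF mRn]] _ ngs[OF sh]])
        show "(\<lambda>x. \<bar>err x\<bar>) summable_on UNIV" using E by (simp add: vb_def)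
      qed (rule key)
      also have "(\<Sum>\<^sub>\<infinity>x. h * mv (R s) n x) = 0" using Rsum0[OF s0 vn] by (simp add: infsum_cmult_right')
      also have "(\<Sum>\<^sub>\<infinity>x. n x) = N s" by (simp add: N_def n_def v_def)
      finally show "N (s+h) \<le> N s + h*e" using E by (simp add: vb_def)
    qed (rule d)
  qed
  moreover have "N 0 = 0" unfolding N_def by (rule infsum_0) (simp add: P0 id_mat_def ng_def)
  ultimately have "N t \<le> 0" by simp
  then have "ng (P t x y) = 0"
    using nonneg_infsum_le_0D[of "\<lambda>x. ng (P t x y)" UNIV x] ngs[OF t] ng_nn unfolding N_def by auto
  then show ?thesis by (simp add: ng_def)
qed

end


lemma mv_lin3:
  assumes A: "cb A a" and B: "cb B b" and Cc: "cb Cc c" and u: "vb u m"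
  shows "mv (\<lambda>x z. A x z - B x z - h * Cc x z) u x = mv A u x - mv B u x - h * mv Cc u x"
proof -
  have sA: "(\<lambda>z. A x z * u z) summable_on UNIV" by (rule mv_bound(1)[OF A u])
  have sB: "(\<lambda>z. B x z * u z) summable_on UNIV" by (rule mv_bound(1)[OF B u])
  have sC: "(\<lambda>z. h * (Cc x z * u z)) summable_on UNIV" by (rule summable_on_cmult_right[OF mv_bound(1)[OF Cc u]])
  have "mv (\<lambda>x z. A x z - B x z - h * Cc x z) u x = (\<Sum>\<^sub>\<infinity>z. (A x z * u z - B x z * u z) - h * (Cc x z * u z))"
    unfolding mv_def by (rule infsum_cong) (simp add: algebra_simps)
  also have "\<dots> = (\<Sum>\<^sub>\<infinity>z. A x z * u z - B x z * u z) - (\<Sum>\<^sub>\<infinity>z. h * (Cc x z * u z))"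
    by (rule infsum_diff'[OF summable_on_diff'[OF sA sB] sC])
  also have "(\<Sum>\<^sub>\<infinity>z. A x z * u z - B x z * u z) = mv A u x - mv B u x"
    unfolding mv_def by (rule infsum_diff'[OF sA sB])
  also have "(\<Sum>\<^sub>\<infinity>z. h * (Cc x z * u z)) = h * mv Cc u x" unfolding mv_def by (rule infsum_cmult_right')
  finally show ?thesis .
qed

definition inv_ex :: "'d smat \<Rightarrow> bool" where
  "inv_ex T \<longleftrightarrow> (\<exists>S M. cb S M \<and> mat_mult S T = id_mat \<and> mat_mult T S = id_mat)"

lemma inv_ex_l1: "inv_ex T \<longleftrightarrow> invertible_l1 T"
  unfolding inv_ex_def invertible_l1_def cb_def vb_def by blast

context tx begin

lemma Pmat_der:
  assumes s: "s \<in> {0..\<tau>} - K" and e: "e > 0"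
  shows "\<exists>d>0. \<forall>h. 0 < h \<and> h < d \<and> s + h \<le> \<tau> \<longrightarrow>
           cb (\<lambda>x z. P (s+h) x z - P s x z - h * mat_mult (R s) (P s) x z) (h*e)"
proof -
  obtain d where d: "d > 0" "\<forall>h. h \<noteq> 0 \<and> \<bar>h\<bar> < d \<and> s + h \<in> {0..\<tau>} \<longrightarrow>
        mat_close (\<lambda>x y. (P (s + h) x y - P s x y) / h) (mat_mult (R s) (P s)) e"
    using Pd s e by blast
  show ?thesis
  proof (intro exI[of _ d] conjI allI impI)
    fix h assume h: "0 < h \<and> h < d \<and> s + h \<le> \<tau>"
    then have "mat_close (\<lambda>x y. (P (s + h) x y - P s x y) / h) (mat_mult (R s) (P s)) e"
      using d s by auto
    then have c: "cb (\<lambda>x y. (P (s + h) x y - P s x y) / h - mat_mult (R s) (P s) x y) e"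
      unfolding mat_close_cb .
    show "cb (\<lambda>x z. P (s+h) x z - P s x z - h * mat_mult (R s) (P s) x z) (h*e)"
    proof (rule cbI)
      fix y
      have "vb (\<lambda>x. h * ((P (s + h) x y - P s x y) / h - mat_mult (R s) (P s) x y)) (\<bar>h\<bar> * e)"
        by (rule vb_scale[OF cbD[OF c]])
      moreover have "h * ((P (s + h) x y - P s x y) / h - mat_mult (R s) (P s) x y)
          = P (s+h) x y - P s x y - h * mat_mult (R s) (P s) x y" for x
        using h by (simp add: field_simps)
      ultimately show "vb (\<lambda>x. P (s+h) x y - P s x y - h * mat_mult (R s) (P s) x y) (h*e)"
        using h by simp
    qed
  qed (rule d(1))
qed

lemma inv_step:
  assumes s0: "s0 \<in> {0..\<tau>}" and S: "cb S M" "mat_mult S (P s0) = id_mat" "mat_mult (P s0) S = id_mat"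
    and t: "t \<in> {s0..\<tau>}" and ex: "exp (rho * (t - s0)) \<le> 3/2"
  shows "inv_ex (P t)"
proof -
  have M0: "M \<ge> 0" using vb_nonneg[OF cbD[OF S(1)]] .
  have t0: "t \<in> {0..\<tau>}" using s0 t by auto
  have sub: "s \<in> {s0..t} \<Longrightarrow> s \<in> {0..\<tau>}" for s using s0 t by auto
  define E where "E = mat_mult (P t) S"
  have Xb: "cb (\<lambda>x y. id_mat x y - E x y) (1/2)"
  proof (rule cbI)
    fix y
    define v where "v s = mv (P s) (\<lambda>z. S z y)" for s
    define c where "c = (\<lambda>x. if x = y then 1 else 0::real)"
    have colS: "vb (\<lambda>z. S z y) M" by (rule cbD[OF S(1)])
    have vbv: "vb (v s) (exp (rho * \<tau>) * M)" if "s \<in> {0..\<tau>}" for s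
      unfolding v_def by (rule mv_bound(2)[OF cbP[OF that] colS])
    have W: "(\<Sum>\<^sub>\<infinity>x. 1 * \<bar>v t x - c x\<bar>) + (\<Sum>\<^sub>\<infinity>x. 1 * \<bar>c x\<bar>)
         \<le> ((\<Sum>\<^sub>\<infinity>x. 1 * \<bar>v s0 x - c x\<bar>) + (\<Sum>\<^sub>\<infinity>x. 1 * \<bar>c x\<bar>)) * exp (rho * (t - s0))"
    proof (rule wgron[where K=K and W=1 and R=R])
      show "s0 \<le> t" using t by simp
      show "finite K" by (rule Kfin)
      show "(1::real) \<le> 1" "(1::real) \<le> 1" by simp_all
      show "(\<lambda>x. \<bar>v s x\<bar>) summable_on UNIV" if "s \<in> {s0..t}" for s
        using vbv[OF sub[OF that]] by (simp add: vb_def)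
      show "(\<lambda>x. \<bar>c x\<bar>) summable_on UNIV" using vb_delta[of y] by (simp add: vb_def c_def)
      show "\<exists>d>0. \<forall>s'\<in>{s0..t}. \<bar>s' - s\<bar> < d \<longrightarrow> vb (\<lambda>x. v s' x - v s x) e"
        if ss: "s \<in> {s0..t}" and ee: "e > 0" for s e
      proof -
        have e': "e / (M + 1) > 0" using ee M0 by simp
        obtain d where d: "d > 0" "\<forall>s'\<in>{0..\<tau>}. \<bar>s' - s\<bar> < d \<longrightarrow> mat_close (P s') (P s) (e / (M + 1))"
          using Pc sub[OF ss] e' unfolding mat_continuous_on_def by blast
        show ?thesis
        proof (intro exI[of _ d] conjI ballI impI)
          fix s' assume s': "s' \<in> {s0..t}" "\<bar>s' - s\<bar> < d"
          then have cd: "cb (\<lambda>x y. P s' x y - P s x y) (e / (M + 1))" using d sub unfolding mat_close_cb by blast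
          have eqf: "mv (\<lambda>x y. P s' x y - P s x y) (\<lambda>z. S z y) = (\<lambda>x. v s' x - v s x)"
            unfolding v_def by (rule ext) (rule mv_diff_left[OF cbP[OF sub[OF s'(1)]] cbP[OF sub[OF ss]] colS])
          have "vb (mv (\<lambda>x y. P s' x y - P s x y) (\<lambda>z. S z y)) (e / (M + 1) * M)"
            by (rule mv_bound(2)[OF cd colS])
          then have vv: "vb (\<lambda>x. v s' x - v s x) (e / (M + 1) * M)" unfolding eqf .
          have "e / (M + 1) * M \<le> e" using M0 ee by (simp add: field_simps)
          then show "vb (\<lambda>x. v s' x - v s x) e" by (rule vb_mono[OF vv])
        qed (rule d(1))
      qed
      show "\<exists>d>0. \<forall>h. 0 < h \<and> h < d \<and> s + h \<le> t \<longrightarrow> vb (\<lambda>x. v (s+h) x - v s x - h * mv (R s) (v s) x) (h*e)"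
        if ss: "s \<in> {s0..<t} - K" and ee: "e > 0" for s e
      proof -
        have s': "s \<in> {0..\<tau>} - K" "s \<in> {0..\<tau>}" using ss sub by auto
        have e': "e / (M + 1) > 0" using ee M0 by simp
        obtain d where d: "d > 0" "\<forall>h. 0 < h \<and> h < d \<and> s + h \<le> \<tau> \<longrightarrow>
           cb (\<lambda>x z. P (s+h) x z - P s x z - h * mat_mult (R s) (P s) x z) (h*(e / (M + 1)))"
          using Pmat_der[OF s'(1) e'] by blast
        show ?thesis
        proof (intro exI[of _ d] conjI allI impI)
          fix h assume h: "0 < h \<and> h < d \<and> s + h \<le> t"
          have sh: "s + h \<in> {0..\<tau>}" using h ss t s0 by auto
          have cd: "cb (\<lambda>x z. P (s+h) x z - P s x z - h * mat_mult (R s) (P s) x z) (h*(e / (M + 1)))"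
            using d h t by auto
          have vbm: "vb (mv (\<lambda>x z. P (s+h) x z - P s x z - h * mat_mult (R s) (P s) x z) (\<lambda>z. S z y)) (h*(e / (M + 1)) * M)"
            by (rule mv_bound(2)[OF cd colS])
          have eqx: "mv (\<lambda>x z. P (s+h) x z - P s x z - h * mat_mult (R s) (P s) x z) (\<lambda>z. S z y) x
              = v (s+h) x - v s x - h * mv (R s) (v s) x" for x
          proof -
            have "mv (\<lambda>x z. P (s+h) x z - P s x z - h * mat_mult (R s) (P s) x z) (\<lambda>z. S z y) x
               = v (s+h) x - v s x - h * mv (mat_mult (R s) (P s)) (\<lambda>z. S z y) x"
              unfolding v_def by (rule mv_lin3[OF cbP[OF sh] cbP[OF s'(2)] mm_bound[OF cbR[OF s'(2)] cbP[OF s'(2)]] colS])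
            also have "mv (mat_mult (R s) (P s)) (\<lambda>z. S z y) = mv (R s) (v s)"
              unfolding v_def by (rule mv_assoc[OF cbR[OF s'(2)] cbP[OF s'(2)] colS, symmetric])
            finally show ?thesis .
          qed
          have le: "h*(e / (M + 1)) * M \<le> h * e"
          proof -
            have a: "e / (M + 1) * M \<le> e" using M0 ee by (simp add: field_simps)
            have "h * (e / (M + 1) * M) \<le> h * e" using a h by (intro mult_left_mono) auto
            then show ?thesis by (simp only: mult.assoc)
          qed
          have eqf: "mv (\<lambda>x z. P (s+h) x z - P s x z - h * mat_mult (R s) (P s) x z) (\<lambda>z. S z y)
              = (\<lambda>x. v (s+h) x - v s x - h * mv (R s) (v s) x)" by (rule ext) (rule eqx)
          show "vb (\<lambda>x. v (s+h) x - v s x - h * mv (R s) (v s) x) (h*e)"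
            by (rule vb_mono[OF vbm[unfolded eqf] le])
        qed (rule d(1))
      qed
      show "(\<lambda>x. 1 * \<bar>mv (R s) u x\<bar>) summable_on UNIV \<and>
          (\<Sum>\<^sub>\<infinity>x. 1 * \<bar>mv (R s) u x\<bar>) \<le> rho * (\<Sum>\<^sub>\<infinity>z. 1 * \<bar>u z\<bar>)"
        if ss: "s \<in> {s0..t}" and us: "(\<lambda>z. 1 * \<bar>u z\<bar>) summable_on UNIV" for s u
        using Rw_act[OF sub[OF ss] order_refl, of y u] us by (simp add: wL_zero)
      show "rho \<ge> 0" by (rule rho_nonneg)
    qed
    have v0: "v s0 = c"
    proof
      fix x
      have "v s0 x = mat_mult (P s0) S x y" by (simp add: v_def mat_mult_mv)
      then show "v s0 x = c x" using S(3) by (simp add: id_mat_def c_def)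
    qed
    have c1: "(\<Sum>\<^sub>\<infinity>x. 1 * \<bar>c x\<bar>) = 1"
      using infsumI[OF delta_has_sum[of y 1]] by (simp add: c_def if_distrib cong: if_cong)
    have "exp (rho * (t - s0)) \<le> 3/2" by (rule ex)
    then have "(\<Sum>\<^sub>\<infinity>x. \<bar>v t x - c x\<bar>) \<le> 1/2" using W c1 v0 by simp
    moreover have "(\<lambda>x. \<bar>v t x - c x\<bar>) summable_on UNIV"
      using vb_diff[OF vbv[OF t0] vb_delta[of y]] by (simp add: vb_def c_def)
    moreover have "\<bar>id_mat x y - E x y\<bar> = \<bar>v t x - c x\<bar>" for x
      by (simp add: E_def v_def c_def mat_mult_mv id_mat_def abs_minus_commute)
    ultimately show "vb (\<lambda>x. id_mat x y - E x y) (1/2)" by (simp add: vb_def)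
  qed
  obtain Si where Si: "cb Si 2" "mat_mult Si (\<lambda>x y. id_mat x y - (id_mat x y - E x y)) = id_mat"
    "mat_mult (\<lambda>x y. id_mat x y - (id_mat x y - E x y)) Si = id_mat"
    using neumann[OF Xb] by auto
  have Ee: "(\<lambda>x y. id_mat x y - (id_mat x y - E x y)) = E" by simp
  have Eb: "cb E (exp (rho * \<tau>) * M)" unfolding E_def by (rule mm_bound[OF cbP[OF t0] S(1)])
  have Pt: "P t = mat_mult E (P s0)"
  proof -
    have "mat_mult E (P s0) = mat_mult (P t) (mat_mult S (P s0))"
      unfolding E_def by (rule mm_assoc[OF cbP[OF t0] S(1) cbP[OF s0]])
    then show ?thesis using S(2) by (simp add: mm_id_right)
  qed
  note ip = inv_prod[OF Eb cbP[OF s0] Si(1)[unfolded Ee] S(1) Si(2)[unfolded Ee] Si(3)[unfolded Ee] S(2) S(3)]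
  show ?thesis unfolding inv_ex_def Pt using ip by blast
qed

lemma Pinv: "t \<in> {0..\<tau>} \<Longrightarrow> inv_ex (P t)"
proof -
  assume t: "t \<in> {0..\<tau>}"
  define \<delta> where "\<delta> = ln (3/2) / (rho + 1)"
  have dpos: "\<delta> > 0" using rho_nonneg by (simp add: \<delta>_def)
  have ex: "exp (rho * (b - a)) \<le> 3/2" if "0 \<le> b - a" "b - a \<le> \<delta>" for a b
  proof -
    have "rho * (b - a) \<le> rho * \<delta>" using that rho_nonneg by (intro mult_left_mono) auto
    also have "rho * \<delta> \<le> ln (3/2)"
    proof -
      have "rho * \<delta> = ln (3/2) * (rho / (rho + 1))" by (simp add: \<delta>_def)
      also have "\<dots> \<le> ln (3/2) * 1" using rho_nonneg by (intro mult_left_mono) auto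
      finally show ?thesis by simp
    qed
    finally have le: "rho * (b - a) \<le> ln (3/2)" .
    have "exp (rho * (b - a)) \<le> exp (ln (3/2))" using le by (simp only: exp_le_cancel_iff)
    also have "exp (ln (3/2)) = (3/2::real)" by simp
    finally show ?thesis .
  qed
  have claim: "\<forall>t\<in>{0..\<tau>}. t \<le> real n * \<delta> \<longrightarrow> inv_ex (P t)" for n
  proof (induction n)
    case 0
    have "inv_ex (P 0)" unfolding inv_ex_def P0 using cb_id mm_id_left by blast
    then show ?case by auto
  next
    case (Suc n)
    show ?case
    proof (intro ballI impI)
      fix t assume t: "t \<in> {0..\<tau>}" and tn: "t \<le> real (Suc n) * \<delta>"
      show "inv_ex (P t)"
      proof (cases "t \<le> real n * \<delta>")
        case True then show ?thesis using Suc t by blast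
      next
        case False
        define s0 where "s0 = real n * \<delta>"
        have s0: "s0 \<in> {0..\<tau>}" using False t dpos by (auto simp: s0_def)
        obtain S M where S: "cb S M" "mat_mult S (P s0) = id_mat" "mat_mult (P s0) S = id_mat"
          using Suc s0 unfolding inv_ex_def s0_def by blast
        show ?thesis
        proof (rule inv_step[OF s0 S])
          show "t \<in> {s0..\<tau>}" using False t by (auto simp: s0_def)
          show "exp (rho * (t - s0)) \<le> 3/2"
            by (rule ex) (use False tn in \<open>auto simp: s0_def algebra_simps\<close>)
        qed
      qed
    qed
  qed
  obtain n :: nat where "t / \<delta> \<le> real n" using real_arch_simple by blast
  then have "t \<le> real n * \<delta>" using dpos by (simp add: field_simps)
  then show ?thesis using claim t by blast
qed

end


lemma stochD1: "stochastic T \<Longrightarrow> T x y \<ge> 0"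
  unfolding stochastic_def by blast

lemma stochD2: "stochastic T \<Longrightarrow> ((\<lambda>x. T x y) has_sum 1) UNIV"
  unfolding stochastic_def by blast

lemma stoch_cb: "stochastic T \<Longrightarrow> cb T 1"
proof (rule cbI)
  fix y assume st: "stochastic T"
  have nn: "\<And>x. T x y \<ge> 0" using stochD1[OF st] .
  have hs: "((\<lambda>x. T x y) has_sum 1) UNIV" by (rule stochD2[OF st])
  have "(\<lambda>x. \<bar>T x y\<bar>) = (\<lambda>x. T x y)" using nn by auto
  then show "vb (\<lambda>x. T x y) 1" using hs unfolding vb_def by (simp add: has_sum_iff)
qed

lemma lis_entry:
  fixes T :: "'d::finite smat"
  assumes "lis_mat T"
  shows "\<exists>c \<beta>. \<beta> > 0 \<and> (\<forall>x y. \<bar>T x y\<bar> \<le> c * exp (-\<beta> * real_of_int \<bar>fst x - fst y\<bar>))"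
proof -
  have st: "stochastic T" and lo: "local_mat T" using assms by (auto simp: lis_mat_def)
  obtain C0 l0 N0 where C0: "C0 > 0" "l0 > 0"
    "\<forall>i a j b. \<bar>i - j\<bar> \<ge> N0 \<longrightarrow> T (i,a) (j,b) \<le> C0 * exp (- real_of_int \<bar>i - j\<bar> / l0)"
    using lo unfolding local_mat_def by blast
  define c where "c = max C0 (exp (real_of_int N0 / l0))"
  have cb1: "cb T 1" by (rule stoch_cb[OF st])
  have nn: "T x y \<ge> 0" for x y using stochD1[OF st] .
  have "\<bar>T x y\<bar> \<le> c * exp (-(1/l0) * real_of_int \<bar>fst x - fst y\<bar>)" for x y
  proof -
    obtain i a where x: "x = (i,a)" by (cases x)
    obtain j b where y: "y = (j,b)" by (cases y)
    have ex: "exp (-(1/l0) * real_of_int \<bar>fst x - fst y\<bar>) = exp (- real_of_int \<bar>i - j\<bar> / l0)"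
      by (simp add: x y)
    show ?thesis
    proof (cases "\<bar>i - j\<bar> \<ge> N0")
      case True
      then have "T x y \<le> C0 * exp (- real_of_int \<bar>i - j\<bar> / l0)" using C0(3) x y by blast
      also have "\<dots> \<le> c * exp (- real_of_int \<bar>i - j\<bar> / l0)" by (rule mult_right_mono) (auto simp: c_def)
      finally have "\<bar>T x y\<bar> \<le> c * exp (- real_of_int \<bar>i - j\<bar> / l0)" using nn[of x y] by simp
      then show ?thesis unfolding ex .
    next
      case False
      have "\<bar>T x y\<bar> \<le> 1" by (rule vb_entry[OF cbD[OF cb1]])
      also have "1 \<le> exp (real_of_int N0 / l0) * exp (- real_of_int \<bar>i - j\<bar> / l0)"
      proof -
        have "real_of_int \<bar>i - j\<bar> / l0 \<le> real_of_int N0 / l0" using False C0(2)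
          by (intro divide_right_mono) auto
        then have "0 \<le> real_of_int N0 / l0 + - real_of_int \<bar>i - j\<bar> / l0" by simp
        then have "1 \<le> exp (real_of_int N0 / l0 + - real_of_int \<bar>i - j\<bar> / l0)" by simp
        then show ?thesis by (simp only: exp_add)
      qed
      also have "\<dots> \<le> c * exp (- real_of_int \<bar>i - j\<bar> / l0)" by (rule mult_right_mono) (auto simp: c_def)
      finally show ?thesis unfolding ex .
    qed
  qed
  then have "(1/l0) > 0 \<and> (\<forall>x y. \<bar>T x y\<bar> \<le> c * exp (-(1/l0) * real_of_int \<bar>fst x - fst y\<bar>))"
    using C0(2) by auto
  then show ?thesis by blast
qed

lemma lis_mult:
  fixes A B :: "'d::finite smat"
  assumes A: "lis_mat A" and B: "lis_mat B"
  shows "lis_mat (mat_mult A B)"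
proof -
  have sA: "stochastic A" and sB: "stochastic B" using A B by (auto simp: lis_mat_def)
  have cA: "cb A 1" and cB: "cb B 1" using stoch_cb sA sB by auto
  obtain a \<alpha> where a: "\<alpha> > 0" "\<forall>x y. \<bar>A x y\<bar> \<le> a * exp (-\<alpha> * real_of_int \<bar>fst x - fst y\<bar>)"
    using lis_entry[OF A] by blast
  obtain b \<beta> where b: "\<beta> > 0" "\<forall>x y. \<bar>B x y\<bar> \<le> b * exp (-\<beta> * real_of_int \<bar>fst x - fst y\<bar>)"
    using lis_entry[OF B] by blast
  define \<gamma> where "\<gamma> = min \<alpha> \<beta> / 2"
  define k where "k = a * b * (real CARD('d) * E1 \<gamma>)"
  have g: "\<gamma> > 0" using a b by (simp add: \<gamma>_def)
  have pl: "\<bar>mat_mult A B x y\<bar> \<le> k * exp (-\<gamma> * real_of_int \<bar>fst x - fst y\<bar>)" for x y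
    unfolding k_def \<gamma>_def by (rule prod_local[OF a(1) b(1)]) (use a b in auto)
  have loc: "local_mat (mat_mult A B)"
    unfolding local_mat_def
  proof (rule exI[of _ "max 1 k"], rule exI[of _ "1/\<gamma>"], rule exI[of _ 0], intro conjI allI impI)
    show "0 < max 1 k" by simp
    show "0 < 1/\<gamma>" using g by simp
    fix i a' j b' assume "\<bar>i - j\<bar> \<ge> (0::int)"
    have "mat_mult A B (i,a') (j,b') \<le> k * exp (-\<gamma> * real_of_int \<bar>i - j\<bar>)" using pl[of "(i,a')" "(j,b')"] by simp
    also have "\<dots> \<le> max 1 k * exp (-\<gamma> * real_of_int \<bar>i - j\<bar>)" by (rule mult_right_mono) auto
    also have "-\<gamma> * real_of_int \<bar>i - j\<bar> = - real_of_int \<bar>i - j\<bar> / (1/\<gamma>)" by simp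
    finally show "mat_mult A B (i,a') (j,b') \<le> max 1 k * exp (- real_of_int \<bar>i - j\<bar> / (1/\<gamma>))" .
  qed
  have st: "stochastic (mat_mult A B)"
    unfolding stochastic_def
  proof (intro conjI allI)
    fix x y
    show "0 \<le> mat_mult A B x y" unfolding mat_mult_def
      by (rule infsum_nonneg) (use stochD1[OF sA] stochD1[OF sB] in auto)
  next
    fix y
    have colB: "vb (\<lambda>z. B z y) 1" by (rule cbD[OF cB])
    have s: "(\<lambda>x. mat_mult A B x y) summable_on UNIV"
      using vb_summable[OF mv_bound(2)[OF cA colB]] by (simp add: mat_mult_mv[abs_def])
    have "(\<Sum>\<^sub>\<infinity>x. mat_mult A B x y) = (\<Sum>\<^sub>\<infinity>x. mv A (\<lambda>z. B z y) x)" by (simp add: mat_mult_mv)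
    also have "\<dots> = (\<Sum>\<^sub>\<infinity>z. (\<Sum>\<^sub>\<infinity>x. A x z) * B z y)" by (rule colsum[OF cA colB])
    also have "\<dots> = (\<Sum>\<^sub>\<infinity>z. B z y)"
      using infsumI[OF stochD2[OF sA]] by simp
    also have "\<dots> = 1" using infsumI[OF stochD2[OF sB]] by simp
    finally show "((\<lambda>x. mat_mult A B x y) has_sum 1) UNIV" using s by (simp add: has_sum_iff)
  qed
  have iv: "invertible_l1 (mat_mult A B)"
  proof -
    obtain SA MA where SA: "cb SA MA" "mat_mult SA A = id_mat" "mat_mult A SA = id_mat"
      using A unfolding lis_mat_def inv_ex_l1[symmetric] inv_ex_def by blast
    obtain SB MB where SB: "cb SB MB" "mat_mult SB B = id_mat" "mat_mult B SB = id_mat"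
      using B unfolding lis_mat_def inv_ex_l1[symmetric] inv_ex_def by blast
    note ip = inv_prod[OF cA cB SA(1) SB(1) SA(2,3) SB(2,3)]
    show ?thesis unfolding inv_ex_l1[symmetric] inv_ex_def using ip by blast
  qed
  show ?thesis using loc st iv by (simp add: lis_mat_def)
qed

context tx begin

lemma P_lis: "t \<in> {0..\<tau>} \<Longrightarrow> lis_mat (P t)"
proof -
  assume t: "t \<in> {0..\<tau>}"
  have loc: "local_mat (P t)" unfolding local_mat_def
  proof (rule exI[of _ "exp (rho * \<tau>)"], rule exI[of _ "1/mu"], rule exI[of _ 0], intro conjI allI impI)
    show "0 < exp (rho * \<tau>)" by simp
    show "0 < 1/mu" using mu_pos by simp
    fix i a j b assume "\<bar>i - j\<bar> \<ge> (0::int)"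
    have "P t (i,a) (j,b) \<le> \<bar>P t (i,a) (j,b)\<bar>" by simp
    also have "\<dots> \<le> exp (rho * \<tau>) * exp (-mu * real_of_int \<bar>i - j\<bar>)" using Pent[OF t, of "(i,a)" "(j,b)"] by simp
    also have "-mu * real_of_int \<bar>i - j\<bar> = - real_of_int \<bar>i - j\<bar> / (1/mu)" by simp
    finally show "P t (i,a) (j,b) \<le> exp (rho * \<tau>) * exp (- real_of_int \<bar>i - j\<bar> / (1/mu))" .
  qed
  have st: "stochastic (P t)" unfolding stochastic_def
  proof (intro conjI allI)
    fix x y show "0 \<le> P t x y" by (rule Pnonneg[OF t])
  next
    fix y show "((\<lambda>x. P t x y) has_sum 1) UNIV"
      using vb_summable[OF vbP[OF t]] colsum1[OF t] by (simp add: has_sum_iff)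
  qed
  have "invertible_l1 (P t)" by (rule inv_ex_l1[THEN iffD1, OF Pinv[OF t]])
  then show ?thesis using loc st by (simp add: lis_mat_def)
qed

end

lemma tx_from:
  fixes R P :: "real \<Rightarrow> ('d::finite) smat"
  assumes tau: "\<tau> \<ge> 0" and lr: "local_rate_family \<tau> R" and ts: "texp_solution \<tau> R P"
  shows "\<exists>C l K. tx \<tau> C l K R P"
proof -
  obtain C l where Cl: "C > 0" "l > 0" "\<forall>t\<in>{0..\<tau>}. \<forall>i a j b. \<bar>R t (i,a) (j,b)\<bar> \<le> C * exp (- real_of_int \<bar>i - j\<bar> / l)"
    using lr unfolding local_rate_family_def by blast
  have rr: "\<forall>t\<in>{0..\<tau>}. rate_mat (R t)" using lr unfolding local_rate_family_def by blast
  obtain K where K: "finite K" "\<forall>s\<in>{0..\<tau>} - K. \<forall>e>0. \<exists>d>0. \<forall>h. h \<noteq> 0 \<and> \<bar>h\<bar> < d \<and> s + h \<in> {0..\<tau>} \<longrightarrow>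
        mat_close (\<lambda>x y. (P (s + h) x y - P s x y) / h) (mat_mult (R s) (P s)) e"
    using ts unfolding texp_solution_def by blast
  have "tx \<tau> C l K R P"
    using tau Cl K rr ts unfolding tx_def texp_solution_def by blast
  then show ?thesis by blast
qed

lemma part1:
  fixes T0 T1 :: "('d::finite) smat"
  assumes T0: "lis_mat T0" and lr: "local_rate_family 1 R" and ts: "texp_solution 1 R P"
    and T1: "T1 = mat_mult (P 1) T0"
  shows "homotopic_mat T0 T1"
proof -
  obtain C l K where tx: "tx 1 C l K R P" using tx_from[of 1 R P] lr ts by auto
  interpret tx 1 C l K R P by (rule tx)
  have cT0: "cb T0 1" using T0 stoch_cb by (auto simp: lis_mat_def)
  define F where "F s = mat_mult (P s) T0" for s
  have "(\<forall>s\<in>{0..1}. lis_mat (F s)) \<and> mat_continuous_on {0..1} F \<and> F 0 = T0 \<and> F 1 = T1"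
  proof (intro conjI ballI)
    fix s :: real assume s: "s \<in> {0..1}"
    show "lis_mat (F s)" unfolding F_def by (rule lis_mult[OF P_lis[OF s] T0])
  next
    show "mat_continuous_on {0..1} F" unfolding mat_continuous_on_def
    proof (intro ballI allI impI)
      fix t e assume t: "t \<in> {0..1::real}" and e: "(e::real) > 0"
      obtain d where d: "d > 0" "\<forall>t'\<in>{0..1}. \<bar>t' - t\<bar> < d \<longrightarrow> mat_close (P t') (P t) e"
        using Pc t e unfolding mat_continuous_on_def by blast
      show "\<exists>d>0. \<forall>t'\<in>{0..1}. \<bar>t' - t\<bar> < d \<longrightarrow> mat_close (F t') (F t) e"
      proof (intro exI[of _ d] conjI ballI impI)
        fix t' assume t': "t' \<in> {0..1::real}" "\<bar>t' - t\<bar> < d"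
        then have cd: "cb (\<lambda>x y. P t' x y - P t x y) e" using d unfolding mat_close_cb by blast
        show "mat_close (F t') (F t) e" unfolding mat_close_cb
        proof (rule cbI)
          fix y
          have colT: "vb (\<lambda>z. T0 z y) 1" by (rule cbD[OF cT0])
          have "vb (mv (\<lambda>x y. P t' x y - P t x y) (\<lambda>z. T0 z y)) (e * 1)" by (rule mv_bound(2)[OF cd colT])
          moreover have "mv (\<lambda>x y. P t' x y - P t x y) (\<lambda>z. T0 z y) = (\<lambda>x. F t' x y - F t x y)"
            unfolding F_def mat_mult_mv
            by (rule ext) (rule mv_diff_left[OF cbP[OF t'(1)] cbP[OF t] colT])
          ultimately show "vb (\<lambda>x. F t' x y - F t x y) e" by simp
        qed
      qed (rule d(1))
    qed
  next
    show "F 0 = T0" unfolding F_def P0 by (rule mm_id_left)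
    show "F 1 = T1" unfolding F_def T1 ..
  qed
  then show ?thesis unfolding homotopic_mat_def by blast
qed

lemma part2:
  fixes R P :: "real \<Rightarrow> ('d::finite) smat"
  assumes taupos: "\<tau> > 0" and lr: "local_rate_family \<tau> R" and ts: "texp_solution \<tau> R P"
  shows "homotopic_mat (P \<tau>) id_mat"
proof -
  obtain C l K where tx: "tx \<tau> C l K R P" using tx_from[of \<tau> R P] lr ts taupos by auto
  interpret tx \<tau> C l K R P by (rule tx)
  define F where "F s = P ((1 - s) * \<tau>)" for s
  have sub: "(1 - s) * \<tau> \<in> {0..\<tau>}" if s: "s \<in> {0..1}" for s
  proof -
    have "(1 - s) * \<tau> \<le> 1 * \<tau>" using s taupos by (intro mult_right_mono) auto
    moreover have "0 \<le> (1 - s) * \<tau>" using s taupos by simp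
    ultimately show ?thesis by simp
  qed
  have "(\<forall>s\<in>{0..1}. lis_mat (F s)) \<and> mat_continuous_on {0..1} F \<and> F 0 = P \<tau> \<and> F 1 = id_mat"
  proof (intro conjI ballI)
    fix s :: real assume s: "s \<in> {0..1}"
    show "lis_mat (F s)" unfolding F_def by (rule P_lis[OF sub[OF s]])
  next
    show "mat_continuous_on {0..1} F" unfolding mat_continuous_on_def
    proof (intro ballI allI impI)
      fix t e assume t: "t \<in> {0..1::real}" and e: "(e::real) > 0"
      obtain d where d: "d > 0" "\<forall>t'\<in>{0..\<tau>}. \<bar>t' - (1 - t) * \<tau>\<bar> < d \<longrightarrow> mat_close (P t') (P ((1 - t) * \<tau>)) e"
        using Pc sub[OF t] e unfolding mat_continuous_on_def by blast
      show "\<exists>d>0. \<forall>t'\<in>{0..1}. \<bar>t' - t\<bar> < d \<longrightarrow> mat_close (F t') (F t) e"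
      proof (intro exI[of _ "d / \<tau>"] conjI ballI impI)
        show "d / \<tau> > 0" using d taupos by simp
        fix t' assume t': "t' \<in> {0..1::real}" "\<bar>t' - t\<bar> < d / \<tau>"
        have eq0: "(1 - t') * \<tau> - (1 - t) * \<tau> = (t - t') * \<tau>" by (simp add: algebra_simps)
        have "\<bar>(1 - t') * \<tau> - (1 - t) * \<tau>\<bar> = \<bar>t' - t\<bar> * \<tau>" unfolding eq0 using taupos
          by (simp add: abs_mult abs_minus_commute)
        also have "\<dots> < d" using t' taupos by (simp add: field_simps)
        finally show "mat_close (F t') (F t) e" unfolding F_def using d sub[OF t'(1)] by blast
      qed
    qed
  next
    show "F 0 = P \<tau>" by (simp add: F_def)
    show "F 1 = id_mat" by (simp add: F_def P0)
  qed
  then show ?thesis unfolding homotopic_mat_def by blast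
qed

theorem mainTheorem1:
  fixes T0 T1 T :: "('d::finite) smat"
  shows "(lis_mat T0 \<and> lis_mat T1 \<and> \<not> homotopic_mat T0 T1 \<longrightarrow>
           \<not> (\<exists>R P. local_rate_family 1 R \<and> piecewise_continuous_mat 1 R \<and>
                   texp_solution 1 R P \<and> T1 = mat_mult (P 1) T0))
       \<and> (lis_mat T \<and> \<not> homotopic_mat T id_mat \<longrightarrow>
           (\<forall>\<tau>>0. \<not> (\<exists>R P. local_rate_family \<tau> R \<and> piecewise_continuous_mat \<tau> R \<and>
                   texp_solution \<tau> R P \<and> T = P \<tau>)))"
proof (intro conjI impI allI notI)
  assume a: "lis_mat T0 \<and> lis_mat T1 \<and> \<not> homotopic_mat T0 T1"
    and b: "\<exists>R P. local_rate_family 1 R \<and> piecewise_continuous_mat 1 R \<and>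
                   texp_solution 1 R P \<and> T1 = mat_mult (P 1) T0"
  then obtain R P where "local_rate_family 1 R" "texp_solution 1 R P" "T1 = mat_mult (P 1) T0"
    by blast
  then have "homotopic_mat T0 T1" using part1 a by blast
  then show False using a by blast
next
  fix \<tau> :: real
  assume a: "lis_mat T \<and> \<not> homotopic_mat T id_mat" and tau: "\<tau> > 0"
    and b: "\<exists>R P. local_rate_family \<tau> R \<and> piecewise_continuous_mat \<tau> R \<and>
                   texp_solution \<tau> R P \<and> T = P \<tau>"
  then obtain R P where "local_rate_family \<tau> R" "texp_solution \<tau> R (P :: real \<Rightarrow> 'd smat)" "T = P \<tau>"
    by blast
  then have "homotopic_mat T id_mat" using part2[OF tau] by blast
  then show False using a by blast
qed


end
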